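(* Consider the reaction network (BIII) on the fourteen species $\mathrm{NE}_i,\mathrm{NI}_i,\mathrm{N}_i,\mathrm{D}_{si},\mathrm{D}_i,\mathrm{T}_i,\mathrm{B}_i$ ($i=1,2$) with irreversible reactions \[ \begin{aligned} &11:\ \mathrm{NI}_1+\mathrm{NE}_1\to\mathrm{N}_1, && 21:\ \mathrm{NI}_2+\mathrm{NE}_2\to\mathrm{N}_2,\\ &12:\ \mathrm{N}_1+\mathrm{D}_2\to\mathrm{NI}_1+\mathrm{T}_2, && 22:\ \mathrm{N}_2+\mathrm{D}_1\to\mathrm{NI}_2+\mathrm{T}_1,\\ &16:\ \mathrm{N}_1+\mathrm{D}_{s2}\to\mathrm{B}_2, && 26:\ \mathrm{N}_2+\mathrm{D}_{s1}\to\mathrm{B}_1,\\ &17:\ \mathrm{B}_2\to\mathrm{N}_1+\mathrm{D}_{s2}, && 27:\ \mathrm{B}_1\to\mathrm{N}_2+\mathrm{D}_{s1},\\ &18:\ \mathrm{D}_{s1}\to\mathrm{D}_1, && 28:\ \mathrm{D}_{s2}\to\mathrm{D}_2,\\ &19:\ \mathrm{T}_1\to\mathrm{NE}_1+\mathrm{D}_{s1}, && 29:\ \mathrm{T}_2\to\mathrm{NE}_2+\mathrm{D}_{s2}, \end{aligned} \] and the associated ODE system \[ \begin{cases} [\dot{\mathrm{NE}}_1]=-r_{11}([\mathrm{NI}_1],[\mathrm{NE}_1])+r_{19}([\mathrm{T}_1]),\\ [\dot{\mathrm{NI}}_1]=r_{12}([\mathrm{N}_1],[\mathrm{D}_2])-r_{11}([\mathrm{NI}_1],[\mathrm{NE}_1]),\\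 [\dot{\mathrm{N}}_1]=-r_{12}([\mathrm{N}_1],[\mathrm{D}_2])+r_{11}([\mathrm{NI}_1],[\mathrm{NE}_1])-r_{16}([\mathrm{N}_1],[\mathrm{D}_{s2}])+r_{17}([\mathrm{B}_2]),\\ [\dot{\mathrm{D}}_{s1}]=r_{19}([\mathrm{T}_1])-r_{26}([\mathrm{N}_2],[\mathrm{D}_{s1}])+r_{27}([\mathrm{B}_1])-r_{18}([\mathrm{D}_{s1}]),\\ [\dot{\mathrm{D}}_1]=r_{18}([\mathrm{D}_{s1}])-r_{22}([\mathrm{N}_2],[\mathrm{D}_1]),\\ [\dot{\mathrm{T}}_1]=-r_{19}([\mathrm{T}_1])+r_{22}([\mathrm{N}_2],[\mathrm{D}_1]),\\ [\dot{\mathrm{B}}_1]=r_{26}([\mathrm{N}_2],[\mathrm{D}_{s1}])-r_{27}([\mathrm{B}_1]),\\ [\dot{\mathrm{NE}}_2]=-r_{21}([\mathrm{NI}_2],[\mathrm{NE}_2])+r_{29}([\mathrm{T}_2]),\\ [\dot{\mathrm{NI}}_2]=r_{22}([\mathrm{N}_2],[\mathrm{D}_1])-r_{21}([\mathrm{NI}_2],[\mathrm{NE}_2]),\\ [\dot{\mathrm{N}}_2]=-r_{26}([\mathrm{N}_2],[\mathrm{D}_{s1}])+r_{27}([\mathrm{B}_1])-r_{22}([\mathrm{N}_2],[\mathrm{D}_1])+r_{21}([\mathrm{NI}_2],[\mathrm{NE}_2]),\\ [\dot{\mathrm{D}}_{s2}]=r_{29}([\mathrm{T}_2])-r_{16}([\mathrm{N}_1],[\mathrm{D}_{s2}])+r_{17}([\mathrm{B}_2])-r_{28}([\mathrm{D}_{s2}]),\\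 [\dot{\mathrm{D}}_2]=-r_{12}([\mathrm{N}_1],[\mathrm{D}_2])+r_{28}([\mathrm{D}_{s2}]),\\ [\dot{\mathrm{T}}_2]=r_{12}([\mathrm{N}_1],[\mathrm{D}_2])-r_{29}([\mathrm{T}_2]),\\ [\dot{\mathrm{B}}_2]=r_{16}([\mathrm{N}_1],[\mathrm{D}_{s2}])-r_{17}([\mathrm{B}_2]), \end{cases} \] with the kinetic symmetry constraints $r_{1k}\equiv r_{2k}$ for $k=1,2,6,7,8,9$. Then the system has the capacity for zero-eigenvalue bifurcations and thus for differentiation. Moreover, up to the symmetry swapping the cell indices $1\leftrightarrow2$, there is exactly one instability motif associated to an unstable-positive feedback, namely, for $(j,k)=(1,2)$ and $(j,k)=(2,1)$, the subnetwork with species $\{\mathrm{N}_j,\mathrm{D}_{sk},\mathrm{D}_k,\mathrm{T}_k\}$ and reactions $\{j2,\ j6,\ k8,\ k9\}$ (i.e. $\mathrm{N}_j+\mathrm{D}_k\to\mathrm{T}_k+\dots$, $\mathrm{N}_j+\mathrm{D}_{sk}\to\dots$, $\mathrm{D}_{sk}\to\mathrm{D}_k$, $\mathrm{T}_k\to\mathrm{D}_{sk}+\dots$). This motif identifies non-autocatalytic positive feedback, and the network (BIII) is non-autocatalytic.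
   Context: General setting. A reaction network has species $X_1,\dots,X_M$ and irreversible reactions $j:\ \sum_m s^j_m X_m\to\sum_m \tilde s^j_m X_m$ with nonnegative stoichiometric coefficients; $X_m$ is a reactant of $j$ if $s^j_m>0$. The stoichiometric matrix is $S_{mj}=\tilde s^j_m-s^j_m$; the ODE system is $\dot x=S\mathbf r(x)$ with rates $r_j$ that are monotone chemical: (i) $r_j\ge0$ on $\mathbb R^M_{\ge0}$; (ii) $r_j(x)>0$ iff $x_m>0$ for all reactants $X_m$ of $j$; (iii) $\partial r_j/\partial x_m\equiv0$ if $X_m$ is not a reactant of $j$; (iv) $\partial r_j/\partial x_m>0$ for $x>0$ and $X_m$ a reactant of $j$. Kinetics are assumed parameter-rich: at any positive steady state the partial derivatives $\partial r_j/\partial x_m$ (for reactants) can be prescribed as arbitrary positive numbers. Symbolic analysis: $R$ is the symbolic reactivity matrix ($R_{jm}=r_{jm}>0$ a symbol if $X_m$ is a reactant of $j$, else $0$), $G=SR$ the symbolic Jacobian, $n=\dim\ker S^T$, and $a_{M-n}$ the sum of the principal minors of order $M-n$ of $G$ (for a nondegenerate network, the determinant of the Jacobian restricted to a stoichiometric compatibility class $(x_0+\operatorname{Im}S)\cap\mathbb R^M_{>0}$). The network has the capacity for zero-eigenvalue bifurcation (differentiation) if there exist positive symbol values with $a_{M-n}=0$ satisfying kinetic symmetry at a homogeneous steady state, i.e. $r_{jm}=r_{\sigma(j)\sigma(m)}$ where $\sigma$ swaps cell indices $1\leftrightarrow2$ of reactions and species. A $k$-Child-Selection (CS) triple $(\kappa,E_\kappa,J)$: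 $k$ species $\kappa$, $k$ reactions $E_\kappa$, bijection $J:\kappa\to E_\kappa$ with each $X_m\in\kappa$ a reactant of $J(X_m)$; its CS-matrix is $S[\kappa]_{ml}=S_{m,J(X_l)}$, $X_m,X_l\in\kappa$. An unstable-positive feedback is a $k\times k$ CS-matrix with $\operatorname{sign}\det S[\kappa]=(-1)^{k-1}$ such that no principal $k'\times k'$ submatrix, $k'<k$, has determinant of sign $(-1)^{k'-1}$. Its instability motif is the subnetwork with species $\kappa$ and reactions $E_\kappa$ (other species are disregarded). An unstable-positive feedback is autocatalytic if it is a Metzler matrix (nonnegative off-diagonal entries); a network is autocatalytic if it has an autocatalytic unstable-positive feedback, non-autocatalytic otherwise. *)

theory Defs
  imports "HOL-Analysis.Analysis"
begin

text \<open>A network with species type 's and reaction type 'r is given by the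
reactant coefficients rin j m = s^j_m and product coefficients rout j m.\<close>

definition stoich_matrix :: "('r \<Rightarrow> 's \<Rightarrow> nat) \<Rightarrow> ('r \<Rightarrow> 's \<Rightarrow> nat) \<Rightarrow> real^'r^'s" where
  "stoich_matrix rin rout = (\<chi> m j. real (rout j m) - real (rin j m))"

definition reactant :: "('r \<Rightarrow> 's \<Rightarrow> nat) \<Rightarrow> 'r \<Rightarrow> 's \<Rightarrow> bool" where
  "reactant rin j m \<longleftrightarrow> rin j m > 0"

text \<open>Symbolic reactivity matrix R with values rho for the symbols r_jm.\<close>
definition react_matrix :: "('r \<Rightarrow> 's \<Rightarrow> nat) \<Rightarrow> ('r \<Rightarrow> 's \<Rightarrow> real) \<Rightarrow> real^'s^'r" where
  "react_matrix rin rho = (\<chi> j m. if reactant rin j m then rho j m else 0)"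

definition det_on :: "'a set \<Rightarrow> ('a \<Rightarrow> 'a \<Rightarrow> real) \<Rightarrow> real" where
  "det_on K A = (\<Sum>p | p permutes K. of_int (sign p) * (\<Prod>i\<in>K. A i (p i)))"

definition n_cons :: "real^'r^'s::finite \<Rightarrow> nat" where
  "n_cons S = dim {w :: real^'s. w v* S = 0}"

definition principal_minor_sum :: "nat \<Rightarrow> real^'s^'s \<Rightarrow> real" where
  "principal_minor_sum q A = (\<Sum>K | card K = q. det_on K (\<lambda>i j. A $ i $ j))"

definition a_top :: "real^'r^'s::finite \<Rightarrow> real^'s^'s \<Rightarrow> real" where
  "a_top S G = principal_minor_sum (CARD('s) - n_cons S) G"

text \<open>Capacity for zero-eigenvalue bifurcation under kinetic symmetry given by the
cell swaps sr (reactions) and ss (species).\<close>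
definition zero_eig_capacity ::
  "('r::finite \<Rightarrow> 's::finite \<Rightarrow> nat) \<Rightarrow> ('r \<Rightarrow> 's \<Rightarrow> nat) \<Rightarrow> ('r \<Rightarrow> 'r) \<Rightarrow> ('s \<Rightarrow> 's) \<Rightarrow> bool" where
  "zero_eig_capacity rin rout sr ss \<longleftrightarrow>
     (\<exists>rho. (\<forall>j m. reactant rin j m \<longrightarrow> 0 < rho j m)
          \<and> (\<forall>j m. reactant rin j m \<longrightarrow> rho (sr j) (ss m) = rho j m)
          \<and> a_top (stoich_matrix rin rout)
                  (stoich_matrix rin rout ** react_matrix rin rho) = 0)"

definition cs_triple :: "('r \<Rightarrow> 's \<Rightarrow> nat) \<Rightarrow> 's set \<Rightarrow> ('s \<Rightarrow> 'r) \<Rightarrow> bool" where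
  "cs_triple rin \<kappa> J \<longleftrightarrow> \<kappa> \<noteq> {} \<and> inj_on J \<kappa> \<and> (\<forall>m\<in>\<kappa>. reactant rin (J m) m)"

definition cs_det :: "real^'r^'s \<Rightarrow> ('s \<Rightarrow> 'r) \<Rightarrow> 's set \<Rightarrow> real" where
  "cs_det S J K = det_on K (\<lambda>m l. S $ m $ J l)"

definition unstable_pos_fb :: "real^'r^'s \<Rightarrow> 's set \<Rightarrow> ('s \<Rightarrow> 'r) \<Rightarrow> bool" where
  "unstable_pos_fb S \<kappa> J \<longleftrightarrow>
     sgn (cs_det S J \<kappa>) = (-1) ^ (card \<kappa> - 1)
     \<and> (\<forall>K. K \<subset> \<kappa> \<and> K \<noteq> {} \<longrightarrow> sgn (cs_det S J K) \<noteq> (-1) ^ (card K - 1))"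

definition cs_metzler :: "real^'r^'s \<Rightarrow> 's set \<Rightarrow> ('s \<Rightarrow> 'r) \<Rightarrow> bool" where
  "cs_metzler S \<kappa> J \<longleftrightarrow> (\<forall>m\<in>\<kappa>. \<forall>l\<in>\<kappa>. m \<noteq> l \<longrightarrow> 0 \<le> S $ m $ J l)"

definition non_autocatalytic :: "('r::finite \<Rightarrow> 's::finite \<Rightarrow> nat) \<Rightarrow> ('r \<Rightarrow> 's \<Rightarrow> nat) \<Rightarrow> bool" where
  "non_autocatalytic rin rout \<longleftrightarrow>
     \<not> (\<exists>\<kappa> J. cs_triple rin \<kappa> J \<and> unstable_pos_fb (stoich_matrix rin rout) \<kappa> J
              \<and> cs_metzler (stoich_matrix rin rout) \<kappa> J)"

definition instability_motifs :: "('r::finite \<Rightarrow> 's::finite \<Rightarrow> nat) \<Rightarrow> ('r \<Rightarrow> 's \<Rightarrow> nat) \<Rightarrow> ('s set \<times> 'r set) set" where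
  "instability_motifs rin rout =
     {(\<kappa>, J ` \<kappa>) | \<kappa> J. cs_triple rin \<kappa> J \<and> unstable_pos_fb (stoich_matrix rin rout) \<kappa> J}"

datatype cell = C1 | C2

fun other :: "cell \<Rightarrow> cell" where
  "other C1 = C2" | "other C2 = C1"

datatype species = NE cell | NI cell | N cell | Ds cell | D cell | T cell | B cell

text \<open>R1 c, R2 c, ... stand for reactions c1, c2, c6, c7, c8, c9.\<close>
datatype reaction = R1 cell | R2 cell | R6 cell | R7 cell | R8 cell | R9 cell

lemma UNIV_cell: "(UNIV :: cell set) = {C1, C2}"
  by (metis UNIV_eq_I cell.exhaust insertCI singletonI)

instance cell :: finite
  by standard (simp add: UNIV_cell)

lemma UNIV_species: "(UNIV :: species set) =
   range NE \<union> range NI \<union> range N \<union> range Ds \<union> range D \<union> range T \<union> range B"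
  proof -
  have "x \<in> range NE \<union> range NI \<union> range N \<union> range Ds \<union> range D \<union> range T \<union> range B" for x
    by (cases x) auto
  then show ?thesis by blast
qed

instance species :: finite
  by standard (simp add: UNIV_species)

lemma UNIV_reaction: "(UNIV :: reaction set) =
   range R1 \<union> range R2 \<union> range R6 \<union> range R7 \<union> range R8 \<union> range R9"
  proof -
  have "x \<in> range R1 \<union> range R2 \<union> range R6 \<union> range R7 \<union> range R8 \<union> range R9" for x
    by (cases x) auto
  then show ?thesis by blast
qed

instance reaction :: finite
  by standard (simp add: UNIV_reaction)

fun bIII_in :: "reaction \<Rightarrow> species \<Rightarrow> nat" where
  "bIII_in (R1 c) m = (if m = NI c \<or> m = NE c then 1 else 0)"
| "bIII_in (R2 c) m = (if m = N c \<or> m = D (other c) then 1 else 0)"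
| "bIII_in (R6 c) m = (if m = N c \<or> m = Ds (other c) then 1 else 0)"
| "bIII_in (R7 c) m = (if m = B (other c) then 1 else 0)"
| "bIII_in (R8 c) m = (if m = Ds c then 1 else 0)"
| "bIII_in (R9 c) m = (if m = T c then 1 else 0)"

fun bIII_out :: "reaction \<Rightarrow> species \<Rightarrow> nat" where
  "bIII_out (R1 c) m = (if m = N c then 1 else 0)"
| "bIII_out (R2 c) m = (if m = NI c \<or> m = T (other c) then 1 else 0)"
| "bIII_out (R6 c) m = (if m = B (other c) then 1 else 0)"
| "bIII_out (R7 c) m = (if m = N c \<or> m = Ds (other c) then 1 else 0)"
| "bIII_out (R8 c) m = (if m = D c then 1 else 0)"
| "bIII_out (R9 c) m = (if m = NE c \<or> m = Ds c then 1 else 0)"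

fun swap_species :: "species \<Rightarrow> species" where
  "swap_species (NE c) = NE (other c)"
| "swap_species (NI c) = NI (other c)"
| "swap_species (N c) = N (other c)"
| "swap_species (Ds c) = Ds (other c)"
| "swap_species (D c) = D (other c)"
| "swap_species (T c) = T (other c)"
| "swap_species (B c) = B (other c)"

fun swap_reaction :: "reaction \<Rightarrow> reaction" where
  "swap_reaction (R1 c) = R1 (other c)"
| "swap_reaction (R2 c) = R2 (other c)"
| "swap_reaction (R6 c) = R6 (other c)"
| "swap_reaction (R7 c) = R7 (other c)"
| "swap_reaction (R8 c) = R8 (other c)"
| "swap_reaction (R9 c) = R9 (other c)"

definition bIII_motif :: "cell \<Rightarrow> species set \<times> reaction set" where
  "bIII_motif j = ({N j, Ds (other j), D (other j), T (other j)},
                   {R2 j, R6 j, R8 (other j), R9 (other j)})"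

end

theory Submission
  imports Defs "Jordan_Normal_Form.Determinant"
begin


lemma det_on_cong:
  assumes "\<And>i j. i \<in> K \<Longrightarrow> j \<in> K \<Longrightarrow> A i j = Bm i j"
  shows "det_on K A = det_on K Bm"
  unfolding det_on_def
proof (rule sum.cong[OF refl])
  fix p assume "p \<in> {p. p permutes K}"
  then have p: "p permutes K" by simp
  show "of_int (sign p) * (\<Prod>i\<in>K. A i (p i)) = of_int (sign p) * (\<Prod>i\<in>K. Bm i (p i))"
    using assms permutes_in_image[OF p] by (auto intro!: prod.cong)
qed

lemma det_on_bridge:
  assumes dist: "distinct xs"
  shows "det_on (set xs) A = det (mat (length xs) (length xs) (\<lambda>(i,j). A (xs!i) (xs!j)))"
proof -
  define n where "n = length xs"
  define f where "f = (\<lambda>i. xs ! i)"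
  define g where "g = inv_into {0..<n} f"
  have bf: "bij_betw f {0..<n} (set xs)"
    unfolding f_def n_def using bij_betw_nth[OF dist] by (simp add: atLeast0LessThan)
  have bg: "bij_betw g (set xs) {0..<n}" unfolding g_def using bf by (rule bij_betw_inv_into)
  have fg: "\<And>x. x \<in> set xs \<Longrightarrow> f (g x) = x" unfolding g_def using bf
    by (meson bij_betw_inv_into_right)
  have gf: "\<And>i. i \<in> {0..<n} \<Longrightarrow> g (f i) = i" unfolding g_def using bf
    by (meson bij_betw_inv_into_left)
  have injf: "inj_on f {0..<n}" using bf bij_betw_def by blast
  define \<phi> where "\<phi> = map_permutation {0..<n} f"
  have bphi: "bij_betw \<phi> {q. q permutes {0..<n}} {p. p permutes set xs}"
  proof (rule bij_betw_byWitness[where f' = "map_permutation (set xs) g"])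
    show "\<forall>q\<in>{q. q permutes {0..<n}}. map_permutation (set xs) g (\<phi> q) = q"
      unfolding \<phi>_def using map_permutation_compose_inv[OF bf _ gf] by auto
    show "\<forall>p\<in>{p. p permutes set xs}. \<phi> (map_permutation (set xs) g p) = p"
      unfolding \<phi>_def using map_permutation_compose_inv[OF bg _ fg] by auto
    show "\<phi> ` {q. q permutes {0..<n}} \<subseteq> {p. p permutes set xs}"
      unfolding \<phi>_def using map_permutation_permutes[OF bf] by auto
    show "map_permutation (set xs) g ` {p. p permutes set xs} \<subseteq> {q. q permutes {0..<n}}"
      using map_permutation_permutes[OF bg] by auto
  qed
  have "det_on (set xs) A = (\<Sum>p\<in>{p. p permutes set xs}. of_int (sign p) * (\<Prod>x\<in>set xs. A x (p x)))"
    unfolding det_on_def by simp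
  also have "\<dots> = (\<Sum>q\<in>{q. q permutes {0..<n}}. of_int (sign (\<phi> q)) * (\<Prod>x\<in>set xs. A x (\<phi> q x)))"
    by (rule sum.reindex_bij_betw[OF bphi, symmetric])
  also have "\<dots> = (\<Sum>q\<in>{q. q permutes {0..<n}}. of_int (sign q) * (\<Prod>i\<in>{0..<n}. A (xs!i) (xs!(q i))))"
  proof (rule sum.cong[OF refl])
    fix q assume "q \<in> {q. q permutes {0..<n}}"
    then have q: "q permutes {0..<n}" by simp
    have "sign (\<phi> q) = sign q" unfolding \<phi>_def
      by (rule sign_map_permutation[OF injf q]) simp
    moreover have "(\<Prod>x\<in>set xs. A x (\<phi> q x)) = (\<Prod>i\<in>{0..<n}. A (f i) (\<phi> q (f i)))"
      by (rule prod.reindex_bij_betw[OF bf, symmetric])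
    moreover have "\<And>i. i \<in> {0..<n} \<Longrightarrow> \<phi> q (f i) = f (q i)"
      unfolding \<phi>_def by (rule map_permutation_apply[OF injf])
    ultimately show "of_int (sign (\<phi> q)) * (\<Prod>x\<in>set xs. A x (\<phi> q x)) =
        of_int (sign q) * (\<Prod>i\<in>{0..<n}. A (xs!i) (xs!(q i)))"
      unfolding f_def by simp
  qed
  also have "\<dots> = det (mat n n (\<lambda>(i,j). A (xs!i) (xs!j)))"
  proof -
    have "det (mat n n (\<lambda>(i,j). A (xs!i) (xs!j))) =
      (\<Sum>q\<in>{q. q permutes {0..<n}}. signof q * (\<Prod>i = 0..<n. (mat n n (\<lambda>(i,j). A (xs!i) (xs!j))) $$ (i, q i)))"
      by (rule det_def') simp
    also have "\<dots> = (\<Sum>q\<in>{q. q permutes {0..<n}}. of_int (sign q) * (\<Prod>i\<in>{0..<n}. A (xs!i) (xs!(q i))))"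
    proof (rule sum.cong[OF refl])
      fix q assume "q \<in> {q. q permutes {0..<n}}"
      then have q: "q permutes {0..<n}" by simp
      have "\<And>i. i \<in> {0..<n} \<Longrightarrow> q i < n" using permutes_in_image[OF q] by auto
      then show "signof q * (\<Prod>i = 0..<n. (mat n n (\<lambda>(i,j). A (xs!i) (xs!j))) $$ (i, q i)) =
           of_int (sign q) * (\<Prod>i\<in>{0..<n}. A (xs!i) (xs!(q i)))"
        by (auto intro!: prod.cong)
    qed
    finally show ?thesis by simp
  qed
  finally show ?thesis unfolding n_def .
qed

fun gdet :: "'a list \<Rightarrow> 'b list \<Rightarrow> ('a \<Rightarrow> 'b \<Rightarrow> real) \<Rightarrow> real"
and gsum :: "'a \<Rightarrow> 'a list \<Rightarrow> ('a \<Rightarrow> 'b \<Rightarrow> real) \<Rightarrow> 'b list \<Rightarrow> 'b list \<Rightarrow> real \<Rightarrow> real" where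
  "gdet [] cs A = 1"
| "gdet (r#rs) cs A = gsum r rs A [] cs 1"
| "gsum r rs A pre [] s = 0"
| "gsum r rs A pre (c#post) s = (if A r c = 0 then 0 else s * A r c * gdet rs (pre @ post) A) + gsum r rs A (pre @ [c]) post (- s)"

lemma gsum_eq:
  "gsum r rs A pre post s = (\<Sum>j<length post. (if A r (post!j) = 0 then 0 else
      s * (-1)^j * A r (post!j) * gdet rs (pre @ take j post @ drop (Suc j) post) A))"
proof (induction post arbitrary: pre s)
  case Nil
  then show ?case by simp
next
  case (Cons c post)
  show ?case
    unfolding gsum.simps Cons.IH length_Cons sum.lessThan_Suc_shift
    by (auto intro!: sum.cong simp: algebra_simps cong: if_cong)
qed

lemma gdet_Cons_eq:
  "gdet (r#rs) cs A = (\<Sum>j<length cs. (if A r (cs!j) = 0 then 0 else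
      (-1)^j * A r (cs!j) * gdet rs (take j cs @ drop (Suc j) cs) A))"
  by (simp add: gsum_eq cong: if_cong)

lemma del_nth:
  assumes "j < length cs" "k < length cs - 1"
  shows "(take j cs @ drop (Suc j) cs) ! k = cs ! (if k < j then k else Suc k)"
  using assms by (auto simp: nth_append min_def)

lemma gdet_correct:
  "length rs = length cs \<Longrightarrow> gdet rs cs A = det (mat (length cs) (length cs) (\<lambda>(i,j). A (rs!i) (cs!j)))"
proof (induction rs arbitrary: cs)
  case Nil
  then show ?case by (simp add: det_def')
next
  case (Cons r rs)
  obtain m where m: "length cs = Suc m" using Cons.prems by (cases cs) auto
  define M where "M = mat (Suc m) (Suc m) (\<lambda>(i,j). A ((r#rs)!i) (cs!j))"
  have MC: "M \<in> carrier_mat (Suc m) (Suc m)" unfolding M_def by simp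
  have del: "mat_delete M 0 j = mat m m (\<lambda>(i,k). A (rs!i) ((take j cs @ drop (Suc j) cs)!k))"
    if j: "j < Suc m" for j
    unfolding mat_delete_def M_def
    by (rule eq_matI) (use j m in \<open>auto simp: del_nth\<close>)
  have "det M = (\<Sum>j<Suc m. M $$ (0,j) * cofactor M 0 j)"
    by (rule laplace_expansion_row[OF MC]) simp
  also have "\<dots> = (\<Sum>j<Suc m. (if A r (cs!j) = 0 then 0 else
      (-1)^j * A r (cs!j) * gdet rs (take j cs @ drop (Suc j) cs) A))"
  proof (rule sum.cong[OF refl])
    fix j assume "j \<in> {..<Suc m}"
    then have j: "j < Suc m" by simp
    have len: "length (take j cs @ drop (Suc j) cs) = m" using j m by simp
    have "gdet rs (take j cs @ drop (Suc j) cs) A = det (mat m m (\<lambda>(i,k). A (rs!i) ((take j cs @ drop (Suc j) cs)!k)))"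
      using Cons.IH[of "take j cs @ drop (Suc j) cs"] Cons.prems len m by simp
    then show "M $$ (0,j) * cofactor M 0 j = (if A r (cs!j) = 0 then 0 else
      (-1)^j * A r (cs!j) * gdet rs (take j cs @ drop (Suc j) cs) A)"
      unfolding cofactor_def del[OF j] using j by (simp add: M_def)
  qed
  finally show ?case unfolding gdet_Cons_eq M_def m by simp
qed

lemma gdet_map:
  assumes "length rs = length cs"
  shows "gdet rs (map f cs) A = gdet rs cs (\<lambda>r c. A r (f c))"
proof -
  have "mat (length cs) (length cs) (\<lambda>(i,j). A (rs!i) (map f cs ! j)) = mat (length cs) (length cs) (\<lambda>(i,j). A (rs!i) (f (cs ! j)))"
    by (rule eq_matI) auto
  then show ?thesis
    using gdet_correct[of rs "map f cs" A] gdet_correct[of rs cs "\<lambda>r c. A r (f c)"] assms by simp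
qed

lemma det_on_gdet:
  assumes "distinct xs"
  shows "det_on (set xs) A = gdet xs xs A"
  using det_on_bridge[OF assms] gdet_correct[of xs xs A] by simp


lemma det_on_block:
  assumes f1: "finite K1" and f2: "finite K2" and dj: "K1 \<inter> K2 = {}"
    and z: "\<And>i j. i \<in> K1 \<Longrightarrow> j \<in> K2 \<Longrightarrow> A i j = 0"
  shows "det_on (K1 \<union> K2) A = det_on K1 A * det_on K2 A"
proof -
  obtain xs1 where x1: "set xs1 = K1" "distinct xs1" using finite_distinct_list[OF f1] by blast
  obtain xs2 where x2: "set xs2 = K2" "distinct xs2" using finite_distinct_list[OF f2] by blast
  define n1 where "n1 = length xs1"
  define n2 where "n2 = length xs2"
  have d: "distinct (xs1 @ xs2)" using x1 x2 dj by auto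
  have s: "set (xs1 @ xs2) = K1 \<union> K2" using x1 x2 by auto
  define M1 where "M1 = mat n1 n1 (\<lambda>(i,j). A (xs1!i) (xs1!j))"
  define M3 where "M3 = mat n2 n1 (\<lambda>(i,j). A (xs2!i) (xs1!j))"
  define M4 where "M4 = mat n2 n2 (\<lambda>(i,j). A (xs2!i) (xs2!j))"
  have eq: "mat (length (xs1 @ xs2)) (length (xs1 @ xs2)) (\<lambda>(i,j). A ((xs1 @ xs2)!i) ((xs1 @ xs2)!j))
      = four_block_mat M1 (0\<^sub>m n1 n2) M3 M4"
  proof (rule eq_matI)
    fix i j assume i: "i < dim_row (four_block_mat M1 (0\<^sub>m n1 n2) M3 M4)"
      and j: "j < dim_col (four_block_mat M1 (0\<^sub>m n1 n2) M3 M4)"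
    then have i': "i < n1 + n2" and j': "j < n1 + n2" by (simp_all add: M1_def M4_def)
    have zz: "A (xs1 ! i) (xs2 ! (j - n1)) = 0" if "i < n1" "\<not> j < n1"
      using z[of "xs1 ! i" "xs2 ! (j - n1)"] that i' j' x1 x2 unfolding n1_def n2_def by auto
    show "mat (length (xs1 @ xs2)) (length (xs1 @ xs2)) (\<lambda>(i,j). A ((xs1 @ xs2)!i) ((xs1 @ xs2)!j)) $$ (i, j)
       = four_block_mat M1 (0\<^sub>m n1 n2) M3 M4 $$ (i, j)"
      using i' j' zz by (simp add: four_block_mat_def M1_def M3_def M4_def nth_append n1_def n2_def Let_def)
  qed (simp_all add: M1_def M4_def n1_def n2_def four_block_mat_def Let_def)
  have "det_on (K1 \<union> K2) A = det (four_block_mat M1 (0\<^sub>m n1 n2) M3 M4)"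
    using det_on_bridge[OF d, of A] s eq by simp
  also have "\<dots> = det M1 * det M4"
    by (rule det_four_block_mat_upper_right_zero[where n=n1 and m=n2]) (simp_all add: M1_def M3_def M4_def)
  also have "\<dots> = det_on K1 A * det_on K2 A"
    using det_on_bridge[OF x1(2), of A] det_on_bridge[OF x2(2), of A] x1 x2
    by (simp add: M1_def M4_def n1_def n2_def)
  finally show ?thesis .
qed


no_notation Matrix.vec_index (infixl "$" 100)




lemma sgn_prod_contra:
  fixes d1 d2 :: real
  assumes "sgn (d1 * d2) = (-1) ^ (k1 + k2 - 1)" "k1 \<ge> 1" "k2 \<ge> 1"
    "sgn d1 \<noteq> (-1) ^ (k1 - 1)" "sgn d2 \<noteq> (-1) ^ (k2 - 1)"
  shows False
proof -
  obtain a where a: "k1 = Suc a" using assms(2) by (cases k1) auto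
  obtain b where b: "k2 = Suc b" using assms(3) by (cases k2) auto
  have e: "(-1::real) ^ (k1 + k2 - 1) = - ((-1) ^ a * (-1) ^ b)" using a b by (simp add: power_add)
  have pa: "(-1::real)^a = 1 \<or> (-1::real)^a = -1" by (simp add: minus_one_power_iff)
  have pb: "(-1::real)^b = 1 \<or> (-1::real)^b = -1" by (simp add: minus_one_power_iff)
  have m: "sgn d1 * sgn d2 = - ((-1) ^ a * (-1) ^ b)" using assms(1) e by (simp add: sgn_mult)
  have s1: "sgn d1 = 1 \<or> sgn d1 = -1 \<or> sgn d1 = 0" by (simp add: sgn_real_def)
  have s2: "sgn d2 = 1 \<or> sgn d2 = -1 \<or> sgn d2 = 0" by (simp add: sgn_real_def)
  have n1: "sgn d1 \<noteq> (-1)^a" and n2: "sgn d2 \<noteq> (-1)^b" using assms(4,5) a b by simp_all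
  show False using pa pb s1 s2 m n1 n2 by auto
qed

lemma upf_sc:
  assumes upf: "unstable_pos_fb S \<kappa> J" and fin: "finite \<kappa>"
    and K: "K1 \<union> K2 = \<kappa>" "K1 \<inter> K2 = {}" "K1 \<noteq> {}" "K2 \<noteq> {}"
  shows "\<exists>i\<in>K1. \<exists>j\<in>K2. S $ i $ J j \<noteq> 0"
proof (rule ccontr)
  assume "\<not> ?thesis"
  then have z: "\<And>i j. i \<in> K1 \<Longrightarrow> j \<in> K2 \<Longrightarrow> S $ i $ J j = 0" by blast
  have f1: "finite K1" "finite K2" using K(1) fin by auto
  have "cs_det S J \<kappa> = cs_det S J K1 * cs_det S J K2"
    unfolding cs_det_def using det_on_block[OF f1 K(2), of "\<lambda>m l. S $ m $ J l"] z K(1) by simp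
  moreover have "card \<kappa> = card K1 + card K2" using K f1 card_Un_disjoint by metis
  moreover have "card K1 \<ge> 1" "card K2 \<ge> 1" using f1 K(3,4) by (auto simp: Suc_le_eq card_gt_0_iff)
  moreover have "K1 \<subset> \<kappa>" "K2 \<subset> \<kappa>" using K by auto
  ultimately show False using upf unfolding unstable_pos_fb_def
    using sgn_prod_contra[of "cs_det S J K1" "cs_det S J K2" "card K1" "card K2"] K(3,4) by metis
qed

definition sf :: "species \<Rightarrow> reaction \<Rightarrow> real" where
  "sf m r = real (bIII_out r m) - real (bIII_in r m)"

lemma S_eq: "stoich_matrix bIII_in bIII_out $ m $ j = sf m j"
  by (simp add: stoich_matrix_def sf_def)

lemma other_other[simp]: "other (other c) = c" by (cases c) auto
lemma other_neq[simp]: "other c \<noteq> c" "c \<noteq> other c" by (cases c; simp)+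

definition opts :: "species \<Rightarrow> reaction list" where
  "opts m = (case m of NE c \<Rightarrow> [R1 c] | NI c \<Rightarrow> [R1 c] | N c \<Rightarrow> [R2 c, R6 c]
     | Ds c \<Rightarrow> [R6 (other c), R8 c] | D c \<Rightarrow> [R2 (other c)] | T c \<Rightarrow> [R9 c] | B c \<Rightarrow> [R7 (other c)])"

lemma other_eq_iff: "(other c = d) = (c = other d)" "(d = other c) = (c = other d)"
  by (cases c; cases d; simp)+

lemma reactant_iff: "reactant bIII_in r m \<longleftrightarrow> r \<in> set (opts m)"
  unfolding reactant_def opts_def
  by (cases r; cases m; auto simp: other_eq_iff)

lemma sf_diag: "reactant bIII_in r m \<Longrightarrow> sf m r = -1"
  unfolding reactant_iff opts_def sf_def
  by (cases m; auto)



fun lall :: "('a \<Rightarrow> bool) \<Rightarrow> 'a list \<Rightarrow> bool" where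
  "lall P [] = True"
| "lall P (x#xs) = (if P x then lall P xs else False)"

fun lex :: "('a \<Rightarrow> bool) \<Rightarrow> 'a list \<Rightarrow> bool" where
  "lex P [] = False"
| "lex P (x#xs) = (if P x then True else lex P xs)"

lemma lall_iff: "lall P xs \<longleftrightarrow> (\<forall>x\<in>set xs. P x)" by (induction xs) auto
lemma lex_iff: "lex P xs \<longleftrightarrow> (\<exists>x\<in>set xs. P x)" by (induction xs) auto

definition mpairs :: "cell \<Rightarrow> (species \<times> reaction) list" where
  "mpairs c = [(N c, R6 c), (Ds (other c), R8 (other c)), (D (other c), R2 c), (T (other c), R9 (other c))]"

definition motif_in :: "species list \<Rightarrow> reaction list \<Rightarrow> cell \<Rightarrow> bool" where
  "motif_in ms rs c = lall (\<lambda>p. p \<in> set (zip ms rs)) (mpairs c)"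

lemma sf_tab[simp]:
  "sf (NE C1) (R1 C1) = - 1"
  "sf (NE C1) (R1 C2) = 0"
  "sf (NE C1) (R2 C1) = 0"
  "sf (NE C1) (R2 C2) = 0"
  "sf (NE C1) (R6 C1) = 0"
  "sf (NE C1) (R6 C2) = 0"
  "sf (NE C1) (R7 C1) = 0"
  "sf (NE C1) (R7 C2) = 0"
  "sf (NE C1) (R8 C1) = 0"
  "sf (NE C1) (R8 C2) = 0"
  "sf (NE C1) (R9 C1) = 1"
  "sf (NE C1) (R9 C2) = 0"
  "sf (NE C2) (R1 C1) = 0"
  "sf (NE C2) (R1 C2) = - 1"
  "sf (NE C2) (R2 C1) = 0"
  "sf (NE C2) (R2 C2) = 0"
  "sf (NE C2) (R6 C1) = 0"
  "sf (NE C2) (R6 C2) = 0"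
  "sf (NE C2) (R7 C1) = 0"
  "sf (NE C2) (R7 C2) = 0"
  "sf (NE C2) (R8 C1) = 0"
  "sf (NE C2) (R8 C2) = 0"
  "sf (NE C2) (R9 C1) = 0"
  "sf (NE C2) (R9 C2) = 1"
  "sf (NI C1) (R1 C1) = - 1"
  "sf (NI C1) (R1 C2) = 0"
  "sf (NI C1) (R2 C1) = 1"
  "sf (NI C1) (R2 C2) = 0"
  "sf (NI C1) (R6 C1) = 0"
  "sf (NI C1) (R6 C2) = 0"
  "sf (NI C1) (R7 C1) = 0"
  "sf (NI C1) (R7 C2) = 0"
  "sf (NI C1) (R8 C1) = 0"
  "sf (NI C1) (R8 C2) = 0"
  "sf (NI C1) (R9 C1) = 0"
  "sf (NI C1) (R9 C2) = 0"
  "sf (NI C2) (R1 C1) = 0"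
  "sf (NI C2) (R1 C2) = - 1"
  "sf (NI C2) (R2 C1) = 0"
  "sf (NI C2) (R2 C2) = 1"
  "sf (NI C2) (R6 C1) = 0"
  "sf (NI C2) (R6 C2) = 0"
  "sf (NI C2) (R7 C1) = 0"
  "sf (NI C2) (R7 C2) = 0"
  "sf (NI C2) (R8 C1) = 0"
  "sf (NI C2) (R8 C2) = 0"
  "sf (NI C2) (R9 C1) = 0"
  "sf (NI C2) (R9 C2) = 0"
  "sf (N C1) (R1 C1) = 1"
  "sf (N C1) (R1 C2) = 0"
  "sf (N C1) (R2 C1) = - 1"
  "sf (N C1) (R2 C2) = 0"
  "sf (N C1) (R6 C1) = - 1"
  "sf (N C1) (R6 C2) = 0"
  "sf (N C1) (R7 C1) = 1"
  "sf (N C1) (R7 C2) = 0"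
  "sf (N C1) (R8 C1) = 0"
  "sf (N C1) (R8 C2) = 0"
  "sf (N C1) (R9 C1) = 0"
  "sf (N C1) (R9 C2) = 0"
  "sf (N C2) (R1 C1) = 0"
  "sf (N C2) (R1 C2) = 1"
  "sf (N C2) (R2 C1) = 0"
  "sf (N C2) (R2 C2) = - 1"
  "sf (N C2) (R6 C1) = 0"
  "sf (N C2) (R6 C2) = - 1"
  "sf (N C2) (R7 C1) = 0"
  "sf (N C2) (R7 C2) = 1"
  "sf (N C2) (R8 C1) = 0"
  "sf (N C2) (R8 C2) = 0"
  "sf (N C2) (R9 C1) = 0"
  "sf (N C2) (R9 C2) = 0"
  "sf (Ds C1) (R1 C1) = 0"
  "sf (Ds C1) (R1 C2) = 0"
  "sf (Ds C1) (R2 C1) = 0"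
  "sf (Ds C1) (R2 C2) = 0"
  "sf (Ds C1) (R6 C1) = 0"
  "sf (Ds C1) (R6 C2) = - 1"
  "sf (Ds C1) (R7 C1) = 0"
  "sf (Ds C1) (R7 C2) = 1"
  "sf (Ds C1) (R8 C1) = - 1"
  "sf (Ds C1) (R8 C2) = 0"
  "sf (Ds C1) (R9 C1) = 1"
  "sf (Ds C1) (R9 C2) = 0"
  "sf (Ds C2) (R1 C1) = 0"
  "sf (Ds C2) (R1 C2) = 0"
  "sf (Ds C2) (R2 C1) = 0"
  "sf (Ds C2) (R2 C2) = 0"
  "sf (Ds C2) (R6 C1) = - 1"
  "sf (Ds C2) (R6 C2) = 0"
  "sf (Ds C2) (R7 C1) = 1"
  "sf (Ds C2) (R7 C2) = 0"
  "sf (Ds C2) (R8 C1) = 0"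
  "sf (Ds C2) (R8 C2) = - 1"
  "sf (Ds C2) (R9 C1) = 0"
  "sf (Ds C2) (R9 C2) = 1"
  "sf (D C1) (R1 C1) = 0"
  "sf (D C1) (R1 C2) = 0"
  "sf (D C1) (R2 C1) = 0"
  "sf (D C1) (R2 C2) = - 1"
  "sf (D C1) (R6 C1) = 0"
  "sf (D C1) (R6 C2) = 0"
  "sf (D C1) (R7 C1) = 0"
  "sf (D C1) (R7 C2) = 0"
  "sf (D C1) (R8 C1) = 1"
  "sf (D C1) (R8 C2) = 0"
  "sf (D C1) (R9 C1) = 0"
  "sf (D C1) (R9 C2) = 0"
  "sf (D C2) (R1 C1) = 0"
  "sf (D C2) (R1 C2) = 0"
  "sf (D C2) (R2 C1) = - 1"
  "sf (D C2) (R2 C2) = 0"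
  "sf (D C2) (R6 C1) = 0"
  "sf (D C2) (R6 C2) = 0"
  "sf (D C2) (R7 C1) = 0"
  "sf (D C2) (R7 C2) = 0"
  "sf (D C2) (R8 C1) = 0"
  "sf (D C2) (R8 C2) = 1"
  "sf (D C2) (R9 C1) = 0"
  "sf (D C2) (R9 C2) = 0"
  "sf (T C1) (R1 C1) = 0"
  "sf (T C1) (R1 C2) = 0"
  "sf (T C1) (R2 C1) = 0"
  "sf (T C1) (R2 C2) = 1"
  "sf (T C1) (R6 C1) = 0"
  "sf (T C1) (R6 C2) = 0"
  "sf (T C1) (R7 C1) = 0"
  "sf (T C1) (R7 C2) = 0"
  "sf (T C1) (R8 C1) = 0"
  "sf (T C1) (R8 C2) = 0"
  "sf (T C1) (R9 C1) = - 1"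
  "sf (T C1) (R9 C2) = 0"
  "sf (T C2) (R1 C1) = 0"
  "sf (T C2) (R1 C2) = 0"
  "sf (T C2) (R2 C1) = 1"
  "sf (T C2) (R2 C2) = 0"
  "sf (T C2) (R6 C1) = 0"
  "sf (T C2) (R6 C2) = 0"
  "sf (T C2) (R7 C1) = 0"
  "sf (T C2) (R7 C2) = 0"
  "sf (T C2) (R8 C1) = 0"
  "sf (T C2) (R8 C2) = 0"
  "sf (T C2) (R9 C1) = 0"
  "sf (T C2) (R9 C2) = - 1"
  "sf (B C1) (R1 C1) = 0"
  "sf (B C1) (R1 C2) = 0"
  "sf (B C1) (R2 C1) = 0"
  "sf (B C1) (R2 C2) = 0"
  "sf (B C1) (R6 C1) = 0"
  "sf (B C1) (R6 C2) = 1"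
  "sf (B C1) (R7 C1) = 0"
  "sf (B C1) (R7 C2) = - 1"
  "sf (B C1) (R8 C1) = 0"
  "sf (B C1) (R8 C2) = 0"
  "sf (B C1) (R9 C1) = 0"
  "sf (B C1) (R9 C2) = 0"
  "sf (B C2) (R1 C1) = 0"
  "sf (B C2) (R1 C2) = 0"
  "sf (B C2) (R2 C1) = 0"
  "sf (B C2) (R2 C2) = 0"
  "sf (B C2) (R6 C1) = 1"
  "sf (B C2) (R6 C2) = 0"
  "sf (B C2) (R7 C1) = - 1"
  "sf (B C2) (R7 C2) = 0"
  "sf (B C2) (R8 C1) = 0"
  "sf (B C2) (R8 C2) = 0"
  "sf (B C2) (R9 C1) = 0"
  "sf (B C2) (R9 C2) = 0"
  by (simp_all add: sf_def)

definition nz :: "species \<Rightarrow> reaction \<Rightarrow> bool" where "nz m r = (sf m r \<noteq> 0)"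
lemma nz_tab[simp]:
  "nz (NE C1) (R1 C1) = True"
  "nz (NE C1) (R1 C2) = False"
  "nz (NE C1) (R2 C1) = False"
  "nz (NE C1) (R2 C2) = False"
  "nz (NE C1) (R6 C1) = False"
  "nz (NE C1) (R6 C2) = False"
  "nz (NE C1) (R7 C1) = False"
  "nz (NE C1) (R7 C2) = False"
  "nz (NE C1) (R8 C1) = False"
  "nz (NE C1) (R8 C2) = False"
  "nz (NE C1) (R9 C1) = True"
  "nz (NE C1) (R9 C2) = False"
  "nz (NE C2) (R1 C1) = False"
  "nz (NE C2) (R1 C2) = True"
  "nz (NE C2) (R2 C1) = False"
  "nz (NE C2) (R2 C2) = False"
  "nz (NE C2) (R6 C1) = False"
  "nz (NE C2) (R6 C2) = False"
  "nz (NE C2) (R7 C1) = False"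
  "nz (NE C2) (R7 C2) = False"
  "nz (NE C2) (R8 C1) = False"
  "nz (NE C2) (R8 C2) = False"
  "nz (NE C2) (R9 C1) = False"
  "nz (NE C2) (R9 C2) = True"
  "nz (NI C1) (R1 C1) = True"
  "nz (NI C1) (R1 C2) = False"
  "nz (NI C1) (R2 C1) = True"
  "nz (NI C1) (R2 C2) = False"
  "nz (NI C1) (R6 C1) = False"
  "nz (NI C1) (R6 C2) = False"
  "nz (NI C1) (R7 C1) = False"
  "nz (NI C1) (R7 C2) = False"
  "nz (NI C1) (R8 C1) = False"
  "nz (NI C1) (R8 C2) = False"
  "nz (NI C1) (R9 C1) = False"
  "nz (NI C1) (R9 C2) = False"
  "nz (NI C2) (R1 C1) = False"
  "nz (NI C2) (R1 C2) = True"
  "nz (NI C2) (R2 C1) = False"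
  "nz (NI C2) (R2 C2) = True"
  "nz (NI C2) (R6 C1) = False"
  "nz (NI C2) (R6 C2) = False"
  "nz (NI C2) (R7 C1) = False"
  "nz (NI C2) (R7 C2) = False"
  "nz (NI C2) (R8 C1) = False"
  "nz (NI C2) (R8 C2) = False"
  "nz (NI C2) (R9 C1) = False"
  "nz (NI C2) (R9 C2) = False"
  "nz (N C1) (R1 C1) = True"
  "nz (N C1) (R1 C2) = False"
  "nz (N C1) (R2 C1) = True"
  "nz (N C1) (R2 C2) = False"
  "nz (N C1) (R6 C1) = True"
  "nz (N C1) (R6 C2) = False"
  "nz (N C1) (R7 C1) = True"
  "nz (N C1) (R7 C2) = False"
  "nz (N C1) (R8 C1) = False"
  "nz (N C1) (R8 C2) = False"
  "nz (N C1) (R9 C1) = False"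
  "nz (N C1) (R9 C2) = False"
  "nz (N C2) (R1 C1) = False"
  "nz (N C2) (R1 C2) = True"
  "nz (N C2) (R2 C1) = False"
  "nz (N C2) (R2 C2) = True"
  "nz (N C2) (R6 C1) = False"
  "nz (N C2) (R6 C2) = True"
  "nz (N C2) (R7 C1) = False"
  "nz (N C2) (R7 C2) = True"
  "nz (N C2) (R8 C1) = False"
  "nz (N C2) (R8 C2) = False"
  "nz (N C2) (R9 C1) = False"
  "nz (N C2) (R9 C2) = False"
  "nz (Ds C1) (R1 C1) = False"
  "nz (Ds C1) (R1 C2) = False"
  "nz (Ds C1) (R2 C1) = False"
  "nz (Ds C1) (R2 C2) = False"
  "nz (Ds C1) (R6 C1) = False"
  "nz (Ds C1) (R6 C2) = True"
  "nz (Ds C1) (R7 C1) = False"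
  "nz (Ds C1) (R7 C2) = True"
  "nz (Ds C1) (R8 C1) = True"
  "nz (Ds C1) (R8 C2) = False"
  "nz (Ds C1) (R9 C1) = True"
  "nz (Ds C1) (R9 C2) = False"
  "nz (Ds C2) (R1 C1) = False"
  "nz (Ds C2) (R1 C2) = False"
  "nz (Ds C2) (R2 C1) = False"
  "nz (Ds C2) (R2 C2) = False"
  "nz (Ds C2) (R6 C1) = True"
  "nz (Ds C2) (R6 C2) = False"
  "nz (Ds C2) (R7 C1) = True"
  "nz (Ds C2) (R7 C2) = False"
  "nz (Ds C2) (R8 C1) = False"
  "nz (Ds C2) (R8 C2) = True"
  "nz (Ds C2) (R9 C1) = False"
  "nz (Ds C2) (R9 C2) = True"
  "nz (D C1) (R1 C1) = False"
  "nz (D C1) (R1 C2) = False"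
  "nz (D C1) (R2 C1) = False"
  "nz (D C1) (R2 C2) = True"
  "nz (D C1) (R6 C1) = False"
  "nz (D C1) (R6 C2) = False"
  "nz (D C1) (R7 C1) = False"
  "nz (D C1) (R7 C2) = False"
  "nz (D C1) (R8 C1) = True"
  "nz (D C1) (R8 C2) = False"
  "nz (D C1) (R9 C1) = False"
  "nz (D C1) (R9 C2) = False"
  "nz (D C2) (R1 C1) = False"
  "nz (D C2) (R1 C2) = False"
  "nz (D C2) (R2 C1) = True"
  "nz (D C2) (R2 C2) = False"
  "nz (D C2) (R6 C1) = False"
  "nz (D C2) (R6 C2) = False"
  "nz (D C2) (R7 C1) = False"
  "nz (D C2) (R7 C2) = False"
  "nz (D C2) (R8 C1) = False"
  "nz (D C2) (R8 C2) = True"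
  "nz (D C2) (R9 C1) = False"
  "nz (D C2) (R9 C2) = False"
  "nz (T C1) (R1 C1) = False"
  "nz (T C1) (R1 C2) = False"
  "nz (T C1) (R2 C1) = False"
  "nz (T C1) (R2 C2) = True"
  "nz (T C1) (R6 C1) = False"
  "nz (T C1) (R6 C2) = False"
  "nz (T C1) (R7 C1) = False"
  "nz (T C1) (R7 C2) = False"
  "nz (T C1) (R8 C1) = False"
  "nz (T C1) (R8 C2) = False"
  "nz (T C1) (R9 C1) = True"
  "nz (T C1) (R9 C2) = False"
  "nz (T C2) (R1 C1) = False"
  "nz (T C2) (R1 C2) = False"
  "nz (T C2) (R2 C1) = True"
  "nz (T C2) (R2 C2) = False"
  "nz (T C2) (R6 C1) = False"
  "nz (T C2) (R6 C2) = False"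
  "nz (T C2) (R7 C1) = False"
  "nz (T C2) (R7 C2) = False"
  "nz (T C2) (R8 C1) = False"
  "nz (T C2) (R8 C2) = False"
  "nz (T C2) (R9 C1) = False"
  "nz (T C2) (R9 C2) = True"
  "nz (B C1) (R1 C1) = False"
  "nz (B C1) (R1 C2) = False"
  "nz (B C1) (R2 C1) = False"
  "nz (B C1) (R2 C2) = False"
  "nz (B C1) (R6 C1) = False"
  "nz (B C1) (R6 C2) = True"
  "nz (B C1) (R7 C1) = False"
  "nz (B C1) (R7 C2) = True"
  "nz (B C1) (R8 C1) = False"
  "nz (B C1) (R8 C2) = False"
  "nz (B C1) (R9 C1) = False"
  "nz (B C1) (R9 C2) = False"
  "nz (B C2) (R1 C1) = False"
  "nz (B C2) (R1 C2) = False"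
  "nz (B C2) (R2 C1) = False"
  "nz (B C2) (R2 C2) = False"
  "nz (B C2) (R6 C1) = True"
  "nz (B C2) (R6 C2) = False"
  "nz (B C2) (R7 C1) = True"
  "nz (B C2) (R7 C2) = False"
  "nz (B C2) (R8 C1) = False"
  "nz (B C2) (R8 C2) = False"
  "nz (B C2) (R9 C1) = False"
  "nz (B C2) (R9 C2) = False"
  by (simp_all add: nz_def)

definition loc2 :: "species list \<Rightarrow> reaction list \<Rightarrow> bool" where
  "loc2 ms rs = (if lall (\<lambda>m. lex (\<lambda>(l,r). l \<noteq> m \<and> nz m r) (zip ms rs)) ms
      then lall (\<lambda>(l,r). lex (\<lambda>m. m \<noteq> l \<and> nz m r) ms) (zip ms rs) else False)"

fun short :: "'a list \<Rightarrow> bool" where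
  "short [] = True" | "short [x] = True" | "short (x#y#zs) = False"

definition gchk :: "species list \<Rightarrow> reaction list \<Rightarrow> bool" where
  "gchk ms rs = (sgn (gdet ms rs sf) \<noteq> (-1) ^ (length ms - 1))"

definition chk :: "species list \<Rightarrow> reaction list \<Rightarrow> bool" where
  "chk ms rs = (if short ms then True
     else if \<not> loc2 ms rs then True else if motif_in ms rs C1 then True
     else if motif_in ms rs C2 then True
     else gchk ms rs)"

fun en2 :: "species list \<Rightarrow> reaction list \<Rightarrow> species list \<Rightarrow> bool" where
  "en2 ms rs [] = chk ms rs"
| "en2 ms rs (m#todo) = lall (\<lambda>r. if r \<in> set rs then True else en2 (ms @ [m]) (rs @ [r]) todo) (opts m)"

fun en1 :: "species list \<Rightarrow> species list \<Rightarrow> bool" where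
  "en1 F [] = en2 [] [] F"
| "en1 F (u#U) = (if en1 (F @ [u]) U then en1 F U else False)"

lemmas evr = lall.simps lex.simps zip_Cons_Cons zip_Nil if_True if_False case_prod_conv species.distinct species.inject
  cell.distinct reaction.distinct reaction.inject nz_tab simp_thms en1.simps en2.simps chk_def loc2_def motif_in_def mpairs_def
  opts_def species.case other.simps short.simps append.simps list.set insert_iff empty_iff prod.inject

lemma e1: "en1 [] [NE C1, NI C1, N C1, Ds C2, D C2, T C2, B C2]"
  apply (simp only: evr)
  apply (simp add: gchk_def)
  done

lemma e2: "en1 [] [NE C2, NI C2, N C2, Ds C1, D C1, T C1, B C1]"
  apply (simp only: evr)
  apply (simp add: gchk_def)
  done

lemma e3: "en1 [NE C1, NE C2, N C1, N C2, T C1, T C2] [Ds C1, Ds C2, B C1, B C2, D C1, D C2]"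
  apply (simp only: evr)
  apply (simp add: gchk_def)
  done



abbreviation "SS \<equiv> stoich_matrix bIII_in bIII_out"

lemma cs_det_sf: "cs_det SS J K = det_on K (\<lambda>m l. sf m (J l))"
  unfolding cs_det_def S_eq ..

lemma en2_sound:
  "en2 ms0 rs0 todo \<Longrightarrow> list_all2 (\<lambda>r m. r \<in> set (opts m)) rs todo \<Longrightarrow> distinct (rs0 @ rs)
   \<Longrightarrow> chk (ms0 @ todo) (rs0 @ rs)"
proof (induction todo arbitrary: ms0 rs0 rs)
  case Nil
  then show ?case by simp
next
  case (Cons m todo)
  obtain r rs' where rs: "rs = r # rs'" "r \<in> set (opts m)" "list_all2 (\<lambda>r m. r \<in> set (opts m)) rs' todo"
    using Cons.prems(2) by (cases rs) auto
  have "r \<notin> set rs0" using Cons.prems(3) rs(1) by auto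
  then have "en2 (ms0 @ [m]) (rs0 @ [r]) todo" using Cons.prems(1) rs(2) by (auto simp: lall_iff)
  from Cons.IH[OF this rs(3)] Cons.prems(3) rs(1) show ?case by simp
qed

lemma en1_sound: "en1 F U \<Longrightarrow> xs \<in> set (subseqs U) \<Longrightarrow> en2 [] [] (F @ xs)"
proof (induction U arbitrary: F xs)
  case Nil
  then show ?case by simp
next
  case (Cons u U)
  have h: "en1 (F @ [u]) U" "en1 F U" using Cons.prems(1) by (auto split: if_splits)
  from Cons.prems(2) consider ys where "ys \<in> set (subseqs U)" "xs = u # ys" | "xs \<in> set (subseqs U)"
    by (auto simp: Let_def)
  then show ?case
  proof cases
    case 1
    then show ?thesis using Cons.IH[OF h(1) 1(1)] by simp
  next
    case 2
    then show ?thesis using Cons.IH[OF h(2) 2] by simp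
  qed
qed

lemma set_zip_map: "set (zip ms (map J ms)) = (\<lambda>l. (l, J l)) ` set ms"
  by (induction ms) auto

definition mJ :: "cell \<Rightarrow> species \<Rightarrow> reaction" where
  "mJ c l = (if l = N c then R6 c else if l = Ds (other c) then R8 (other c) else if l = D (other c) then R2 c else R9 (other c))"

lemma motif_det: "det_on {N c, Ds (other c), D (other c), T (other c)} (\<lambda>m l. sf m (mJ c l)) = -1"
proof -
  have "det_on (set [N c, Ds (other c), D (other c), T (other c)]) (\<lambda>m l. sf m (mJ c l)) = -1"
    by (subst det_on_gdet) (cases c; simp add: mJ_def)+
  then show ?thesis by simp
qed

lemma chk_sound:
  assumes ct: "cs_triple bIII_in \<kappa> J" and upf: "unstable_pos_fb SS \<kappa> J"
    and ms: "distinct ms" "set ms = \<kappa>" and ch: "chk ms (map J ms)"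
  shows "(\<kappa>, J ` \<kappa>) \<in> {bIII_motif C1, bIII_motif C2}"
proof -
  have fin: "finite \<kappa>" using ms by auto
  have card: "card \<kappa> = length ms" using ms distinct_card by metis
  have react: "\<And>m. m \<in> \<kappa> \<Longrightarrow> reactant bIII_in (J m) m" using ct unfolding cs_triple_def by auto
  have up1: "sgn (cs_det SS J \<kappa>) = (-1) ^ (card \<kappa> - 1)" using upf unfolding unstable_pos_fb_def by auto
  have up2: "\<And>K. K \<subset> \<kappa> \<Longrightarrow> K \<noteq> {} \<Longrightarrow> sgn (cs_det SS J K) \<noteq> (-1) ^ (card K - 1)"
    using upf unfolding unstable_pos_fb_def by auto
  have sz: "zp \<in> set (zip ms (map J ms)) \<longleftrightarrow> (\<exists>l\<in>\<kappa>. zp = (l, J l))" for zp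
    using set_zip_map[of ms J] ms(2) by auto
    have ns: "\<not> short ms"
  proof
    assume "short ms"
    then consider "ms = []" | m where "ms = [m]" by (cases ms rule: short.cases) auto
    then show False
    proof cases
      case 1 then show False using ct ms(2) unfolding cs_triple_def by simp
    next
      case 2
      then have k: "\<kappa> = {m}" using ms(2) by simp
      have "cs_det SS J \<kappa> = sf m (J m)" unfolding cs_det_sf k
        using det_on_gdet[of "[m]" "\<lambda>m l. sf m (J l)"] by simp
      also have "\<dots> = -1" using sf_diag react k by simp
      finally show False using up1 k by simp
    qed
  qed
  have two: "\<And>m. m \<in> \<kappa> \<Longrightarrow> \<kappa> - {m} \<noteq> {}"
  proof -
    fix m assume "m \<in> \<kappa>"
    show "\<kappa> - {m} \<noteq> {}"
    proof
      assume "\<kappa> - {m} = {}"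
      then have "\<kappa> = {m}" using \<open>m \<in> \<kappa>\<close> by auto
      then have "length ms = 1" using card by simp
      then show False using ns by (cases ms rule: short.cases) auto
    qed
  qed
    have outc: "\<exists>l\<in>\<kappa>. l \<noteq> m \<and> nz m (J l)" if m: "m \<in> \<kappa>" for m
  proof -
    obtain i j where "i \<in> {m}" "j \<in> \<kappa> - {m}" "SS $ i $ J j \<noteq> 0"
      using upf_sc[OF upf fin, of "{m}" "\<kappa> - {m}"] m two[OF m] by auto
    then show ?thesis by (auto simp: S_eq nz_def)
  qed
  have inc: "\<exists>m\<in>\<kappa>. m \<noteq> l \<and> nz m (J l)" if l: "l \<in> \<kappa>" for l
  proof -
    obtain i j where "i \<in> \<kappa> - {l}" "j \<in> {l}" "SS $ i $ J j \<noteq> 0"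
      using upf_sc[OF upf fin, of "\<kappa> - {l}" "{l}"] l two[OF l] by auto
    then show ?thesis by (auto simp: S_eq nz_def)
  qed
  have lc: "loc2 ms (map J ms)"
    unfolding loc2_def lall_iff lex_iff using outc inc ms(2) sz by fastforce
    have mot: "(\<kappa>, J ` \<kappa>) = bIII_motif c" if mi: "motif_in ms (map J ms) c" for c
  proof -
    let ?K = "{N c, Ds (other c), D (other c), T (other c)}"
    have mem: "N c \<in> \<kappa>" "Ds (other c) \<in> \<kappa>" "D (other c) \<in> \<kappa>" "T (other c) \<in> \<kappa>"
      and jv: "J (N c) = R6 c" "J (Ds (other c)) = R8 (other c)" "J (D (other c)) = R2 c" "J (T (other c)) = R9 (other c)"
      using mi unfolding motif_in_def lall_iff mpairs_def sz by auto
    have sub: "?K \<subseteq> \<kappa>" using mem by auto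
    have cK: "card ?K = 4" by (cases c) auto
    have dK: "cs_det SS J ?K = -1"
    proof -
      have "det_on ?K (\<lambda>m l. sf m (J l)) = det_on ?K (\<lambda>m l. sf m (mJ c l))"
        by (rule det_on_cong) (auto simp: mJ_def jv)
      then show ?thesis unfolding cs_det_sf using motif_det[of c] by simp
    qed
    have "?K = \<kappa>"
    proof (rule ccontr)
      assume "?K \<noteq> \<kappa>"
      then have "?K \<subset> \<kappa>" using sub by auto
      from up2[OF this] dK cK show False by simp
    qed
    then show ?thesis unfolding bIII_motif_def using jv by auto
  qed
  show ?thesis
  proof (cases "motif_in ms (map J ms) C1 \<or> motif_in ms (map J ms) C2")
    case True
    then show ?thesis using mot by blast
  next
    case False
    then have "gchk ms (map J ms)" using ch ns lc unfolding chk_def by auto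
    moreover have "gdet ms (map J ms) sf = cs_det SS J \<kappa>"
      unfolding cs_det_sf ms(2)[symmetric] det_on_gdet[OF ms(1)] gdet_map[OF refl] ..
    ultimately show ?thesis using up1 card unfolding gchk_def by simp
  qed
qed


lemma species_cases: "x \<in> {NE C1, NE C2, NI C1, NI C2, N C1, N C2, Ds C1, Ds C2, D C1, D C2, T C1, T C2, B C1, B C2}"
proof (cases x)
  case (NE c) then show ?thesis by (cases c) auto
next
  case (NI c) then show ?thesis by (cases c) auto
next
  case (N c) then show ?thesis by (cases c) auto
next
  case (Ds c) then show ?thesis by (cases c) auto
next
  case (D c) then show ?thesis by (cases c) auto
next
  case (T c) then show ?thesis by (cases c) auto
next
  case (B c) then show ?thesis by (cases c) auto
qed

definition grp :: "cell \<Rightarrow> species set" where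
  "grp c = {NE c, NI c, N c, Ds (other c), D (other c), T (other c), B (other c)}"

lemma grp_cover: "x \<in> grp c \<or> x \<in> grp (other c)"
  using species_cases[of x] by (cases c) (auto simp: grp_def)

lemma edge:
  assumes "i \<in> grp c" "j \<notin> grp c" "J j \<in> set (opts j)" "sf i (J j) \<noteq> 0"
  shows "i = NE c \<and> j = T c"
  using assms species_cases[of j] by (cases c) (auto simp: grp_def opts_def)

lemma via_enum:
  assumes ct: "cs_triple bIII_in \<kappa> J" and upf: "unstable_pos_fb SS \<kappa> J"
    and d: "distinct (F @ U)" and sF: "set F \<subseteq> \<kappa>" and sU: "\<kappa> \<subseteq> set F \<union> set U"
    and en: "en1 F U"
  shows "(\<kappa>, J ` \<kappa>) \<in> {bIII_motif C1, bIII_motif C2}"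
proof -
  have "\<kappa> - set F \<in> Pow (set U)" using sU by auto
  then obtain xs where xs: "xs \<in> set (subseqs U)" "set xs = \<kappa> - set F"
    unfolding subseqs_powset[symmetric] by auto
  have dxs: "distinct xs" using subseqs_distinctD[OF xs(1)] d by simp
  define ms where "ms = F @ xs"
  have dms: "distinct ms" unfolding ms_def using d dxs xs(2) by auto
  have sms: "set ms = \<kappa>" unfolding ms_def using xs(2) sF by auto
  have e2: "en2 [] [] ms" unfolding ms_def by (rule en1_sound[OF en xs(1)])
  have opt: "\<And>m. m \<in> \<kappa> \<Longrightarrow> J m \<in> set (opts m)"
    using ct unfolding cs_triple_def reactant_iff by auto
  have la: "list_all2 (\<lambda>r m. r \<in> set (opts m)) (map J ms) ms"
    using opt sms by (auto simp: list_all2_conv_all_nth)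
  have inj: "inj_on J \<kappa>" using ct unfolding cs_triple_def by auto
  have dm: "distinct ([] @ map J ms)" using dms inj sms by (simp add: distinct_map)
  have "chk ([] @ ms) ([] @ map J ms)" by (rule en2_sound[OF e2 la dm])
  then show ?thesis using chk_sound[OF ct upf dms sms] by simp
qed

lemma grp_lemma:
  assumes ct: "cs_triple bIII_in \<kappa> J" and upf: "unstable_pos_fb SS \<kappa> J"
    and n1: "\<not> \<kappa> \<subseteq> grp c" and n2: "\<not> \<kappa> \<subseteq> grp (other c)"
  shows "NE c \<in> \<kappa> \<and> T c \<in> \<kappa>"
proof -
  have fin: "finite \<kappa>" by simp
  obtain x where x: "x \<in> \<kappa>" "x \<notin> grp (other c)" using n2 by auto
  then have "x \<in> grp c" using grp_cover[of x c] by auto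
  then have ne1: "\<kappa> \<inter> grp c \<noteq> {}" using x by auto
  have ne2: "\<kappa> - grp c \<noteq> {}" using n1 by auto
  obtain i j where ij: "i \<in> \<kappa> \<inter> grp c" "j \<in> \<kappa> - grp c" "SS $ i $ J j \<noteq> 0"
    using upf_sc[OF upf fin, of "\<kappa> \<inter> grp c" "\<kappa> - grp c"] ne1 ne2 by blast
  have "J j \<in> set (opts j)" using ct ij(2) unfolding cs_triple_def reactant_iff by auto
  then have "i = NE c \<and> j = T c" using edge[of i c j J] ij by (auto simp: S_eq)
  then show ?thesis using ij by auto
qed

lemma n_lemma:
  assumes ct: "cs_triple bIII_in \<kappa> J" and upf: "unstable_pos_fb SS \<kappa> J"
    and ne: "NE c \<in> \<kappa>" and t: "T c \<in> \<kappa>"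
  shows "N c \<in> \<kappa> \<and> NI c \<notin> \<kappa>"
proof -
  have fin: "finite \<kappa>" by simp
  have opt: "\<And>m. m \<in> \<kappa> \<Longrightarrow> J m \<in> set (opts m)"
    using ct unfolding cs_triple_def reactant_iff by auto
  have inj: "inj_on J \<kappa>" using ct unfolding cs_triple_def by auto
  have jne: "J (NE c) = R1 c" using opt[OF ne] by (simp add: opts_def)
  have ni: "NI c \<notin> \<kappa>"
  proof
    assume a: "NI c \<in> \<kappa>"
    then have "J (NI c) = R1 c" using opt[OF a] by (simp add: opts_def)
    then show False using inj jne a ne unfolding inj_on_def by force
  qed
  obtain i j where ij: "i \<in> \<kappa> - {NE c}" "j \<in> {NE c}" "SS $ i $ J j \<noteq> 0"
    using upf_sc[OF upf fin, of "\<kappa> - {NE c}" "{NE c}"] ne t by blast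
  then have "sf i (R1 c) \<noteq> 0" using jne by (simp add: S_eq)
  then have "i = N c \<or> i = NI c \<or> i = NE c" using species_cases[of i] by (cases c) auto
  then show ?thesis using ij ni by auto
qed

theorem classify:
  assumes ct: "cs_triple bIII_in \<kappa> J" and upf: "unstable_pos_fb SS \<kappa> J"
  shows "(\<kappa>, J ` \<kappa>) \<in> {bIII_motif C1, bIII_motif C2}"
proof -
  have g1: "grp C1 = set [NE C1, NI C1, N C1, Ds C2, D C2, T C2, B C2]" by (simp add: grp_def)
  have g2: "grp C2 = set [NE C2, NI C2, N C2, Ds C1, D C1, T C1, B C1]" by (simp add: grp_def)
  consider "\<kappa> \<subseteq> grp C1" | "\<kappa> \<subseteq> grp C2" | "\<not> \<kappa> \<subseteq> grp C1" "\<not> \<kappa> \<subseteq> grp C2" by blast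
  then show ?thesis
  proof cases
    case 1
    show ?thesis by (rule via_enum[OF ct upf _ _ _ e1]) (use 1 g1 in auto)
  next
    case 2
    show ?thesis by (rule via_enum[OF ct upf _ _ _ e2]) (use 2 g2 in auto)
  next
    case 3
    have a: "NE C1 \<in> \<kappa> \<and> T C1 \<in> \<kappa>" using grp_lemma[OF ct upf, of C1] 3 by simp
    have b: "NE C2 \<in> \<kappa> \<and> T C2 \<in> \<kappa>" using grp_lemma[OF ct upf, of C2] 3 by simp
    have c: "N C1 \<in> \<kappa> \<and> NI C1 \<notin> \<kappa>" using n_lemma[OF ct upf] a by blast
    have d: "N C2 \<in> \<kappa> \<and> NI C2 \<notin> \<kappa>" using n_lemma[OF ct upf] b by blast
    have sub: "\<kappa> \<subseteq> set [NE C1, NE C2, N C1, N C2, T C1, T C2] \<union> set [Ds C1, Ds C2, B C1, B C2, D C1, D C2]"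
    proof
      fix x assume "x \<in> \<kappa>"
      then show "x \<in> set [NE C1, NE C2, N C1, N C2, T C1, T C2] \<union> set [Ds C1, Ds C2, B C1, B C2, D C1, D C2]"
        using species_cases[of x] c d by auto
    qed
    show ?thesis by (rule via_enum[OF ct upf _ _ sub e3]) (use a b c d in auto)
  qed
qed



lemma prod_delta_t:
  fixes t :: real
  assumes "finite X"
  shows "(\<Prod>i\<in>X. t * (if i = p i then 1 else 0)) = (if (\<forall>i\<in>X. p i = i) then t ^ card X else 0)"
proof (cases "\<forall>i\<in>X. p i = i")
  case True
  then have "(\<Prod>i\<in>X. t * (if i = p i then 1 else 0)) = (\<Prod>i\<in>X. t)" by (auto intro!: prod.cong)
  then show ?thesis using True by simp
next
  case False
  then obtain i where "i \<in> X" "p i \<noteq> i" by auto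
  then have "\<exists>a\<in>X. t * (if a = p a then 1 else 0) = 0" by (intro bexI[of _ i]) auto
  from prod_zero[OF assms this] have z: "(\<Prod>i\<in>X. t * (if i = p i then 1 else 0)) = 0" .
  have "(if (\<forall>i\<in>X. p i = i) then t ^ card X else 0) = 0" by (simp only: if_not_P[OF False])
  then show ?thesis using z by simp
qed

lemma permutes_fix_iff:
  "(p permutes (UNIV::'n set) \<and> (\<forall>i\<in>X. p i = i)) \<longleftrightarrow> p permutes (- X)"
  unfolding permutes_def by auto

lemma card_Compl': "card (- (K::'n::finite set)) = CARD('n) - card K"
  by (metis Compl_eq_Diff_UNIV card_Diff_subset finite subset_UNIV)

lemma charpoly:
  fixes A :: "real^'n^'n"
  shows "Determinants.det (A + t *\<^sub>R Finite_Cartesian_Product.mat 1) =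
     (\<Sum>q\<le>CARD('n). t ^ (CARD('n) - q) * principal_minor_sum q A)"
proof -
  let ?U = "UNIV :: 'n set"
  let ?A = "\<lambda>i j. A $ i $ j"
  have "Determinants.det (A + t *\<^sub>R Finite_Cartesian_Product.mat 1) =
    (\<Sum>p\<in>{p. p permutes ?U}. of_int (sign p) * (\<Prod>i\<in>?U. t * (if i = p i then 1 else 0) + A $ i $ p i))"
    unfolding Determinants.det_def by (simp add: Finite_Cartesian_Product.mat_def add.commute)
  also have "\<dots> = (\<Sum>p\<in>{p. p permutes ?U}. \<Sum>X\<in>Pow ?U. of_int (sign p) *
      ((if (\<forall>i\<in>X. p i = i) then t ^ card X else 0) * (\<Prod>i\<in>?U - X. A $ i $ p i)))"
    by (simp add: prod_add prod_delta_t sum_distrib_left)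
  also have "\<dots> = (\<Sum>X\<in>Pow ?U. \<Sum>p\<in>{p. p permutes ?U}. of_int (sign p) *
      ((if (\<forall>i\<in>X. p i = i) then t ^ card X else 0) * (\<Prod>i\<in>?U - X. A $ i $ p i)))"
    by (rule sum.swap)
  also have "\<dots> = (\<Sum>X\<in>Pow ?U. t ^ card X * det_on (- X) ?A)"
  proof (rule sum.cong[OF refl])
    fix X :: "'n set"
    have "(\<Sum>p\<in>{p. p permutes ?U}. of_int (sign p) *
      ((if (\<forall>i\<in>X. p i = i) then t ^ card X else 0) * (\<Prod>i\<in>?U - X. A $ i $ p i)))
      = (\<Sum>p\<in>{p. p permutes ?U \<and> (\<forall>i\<in>X. p i = i)}. t ^ card X * (of_int (sign p) * (\<Prod>i\<in>- X. A $ i $ p i)))"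
      by (rule sum.mono_neutral_cong_right) (auto simp: Compl_eq_Diff_UNIV)
    also have "\<dots> = t ^ card X * det_on (- X) ?A"
      unfolding det_on_def permutes_fix_iff by (simp add: sum_distrib_left)
    finally show "(\<Sum>p\<in>{p. p permutes ?U}. of_int (sign p) *
      ((if (\<forall>i\<in>X. p i = i) then t ^ card X else 0) * (\<Prod>i\<in>?U - X. A $ i $ p i))) = t ^ card X * det_on (- X) ?A" .
  qed
  also have "\<dots> = (\<Sum>K\<in>Pow ?U. t ^ (CARD('n) - card K) * det_on K ?A)"
    by (rule sum.reindex_bij_witness[where i = uminus and j = uminus])
       (auto simp: card_Compl' card_mono)
  also have "\<dots> = (\<Sum>q\<le>CARD('n). \<Sum>K\<in>{K \<in> Pow ?U. card K = q}. t ^ (CARD('n) - card K) * det_on K ?A)"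
    by (rule sum.group[symmetric]) (auto simp: card_mono)
  also have "\<dots> = (\<Sum>q\<le>CARD('n). t ^ (CARD('n) - q) * principal_minor_sum q A)"
    unfolding principal_minor_sum_def by (auto intro!: sum.cong simp: sum_distrib_left)
  finally show ?thesis .
qed


lemma matrix_add_rdistrib': "((X + Y) ** (A::real^'n^'n)) = (X ** A) + (Y ** A)"
  by (simp add: Finite_Cartesian_Product.vec_eq_iff matrix_matrix_mult_def sum.distrib distrib_right)

lemma det_similar_shift:
  fixes A P Q :: "real^'n^'n"
  assumes PQ: "P ** Q = Finite_Cartesian_Product.mat 1"
  shows "Determinants.det (P ** A ** Q + t *\<^sub>R Finite_Cartesian_Product.mat 1) =
         Determinants.det (A + t *\<^sub>R Finite_Cartesian_Product.mat 1)"
proof -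
  have "P ** (A + t *\<^sub>R Finite_Cartesian_Product.mat 1) ** Q = P ** A ** Q + t *\<^sub>R Finite_Cartesian_Product.mat 1"
    by (simp add: matrix_add_ldistrib matrix_add_rdistrib' matrix_scalar_ac scalar_matrix_assoc[symmetric] PQ)
  then have "Determinants.det (P ** A ** Q + t *\<^sub>R Finite_Cartesian_Product.mat 1) =
      Determinants.det P * Determinants.det (A + t *\<^sub>R Finite_Cartesian_Product.mat 1) * Determinants.det Q"
    by (metis det_mul)
  also have "\<dots> = Determinants.det (A + t *\<^sub>R Finite_Cartesian_Product.mat 1) * Determinants.det (P ** Q)"
    by (simp add: det_mul)
  finally show ?thesis using PQ by simp
qed

lemma sum_rev_poly:
  fixes c :: "nat \<Rightarrow> real"
  shows "(\<Sum>q\<le>n. t ^ (n - q) * c q) = (\<Sum>i\<le>n. c (n - i) * t ^ i)"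
proof -
  have "(\<Sum>q\<le>n. t ^ (n - q) * c q) = (\<Sum>q\<in>{0..n}. t ^ (n - q) * c q)" by (simp add: atMost_atLeast0)
  also have "\<dots> = (\<Sum>i\<in>{0..n}. t ^ (n - (n + 0 - i)) * c (n + 0 - i))"
    by (rule sum.atLeastAtMost_rev)
  also have "\<dots> = (\<Sum>i\<in>{0..n}. c (n - i) * t ^ i)"
    by (rule sum.cong) auto
  finally show ?thesis by (simp add: atMost_atLeast0)
qed

lemma pms_similar:
  fixes A P Q :: "real^'n^'n"
  assumes PQ: "P ** Q = Finite_Cartesian_Product.mat 1" and q: "q \<le> CARD('n)"
  shows "principal_minor_sum q (P ** A ** Q) = principal_minor_sum q A"
proof -
  let ?n = "CARD('n)"
  have "\<forall>t. (\<Sum>i\<le>?n. principal_minor_sum (?n - i) (P ** A ** Q) * t ^ i) =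
            (\<Sum>i\<le>?n. principal_minor_sum (?n - i) A * t ^ i)"
    using det_similar_shift[OF PQ, of A] charpoly[of "P ** A ** Q"] charpoly[of A]
    by (simp add: sum_rev_poly)
  then have "\<forall>i\<le>?n. principal_minor_sum (?n - i) (P ** A ** Q) = principal_minor_sum (?n - i) A"
    unfolding polyfun_eq_coeffs .
  from this[rule_format, of "?n - q"] q show ?thesis by simp
qed



lemma det_on_zero_row:
  assumes "finite K" "i \<in> K" "\<And>j. j \<in> K \<Longrightarrow> A i j = 0"
  shows "det_on K A = 0"
  unfolding det_on_def
proof (rule sum.neutral, rule ballI)
  fix p assume "p \<in> {p. p permutes K}"
  then have "p i \<in> K" using permutes_in_image[of p K i] assms(2) by auto
  then have "(\<Prod>i\<in>K. A i (p i)) = 0" using assms by (intro prod_zero) auto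
  then show "of_int (sign p) * (\<Prod>i\<in>K. A i (p i)) = 0" by simp
qed

lemma det_on_null:
  assumes fin: "finite K" and k: "k \<in> K" and vk: "v k \<noteq> 0"
    and z: "\<And>i. i \<in> K \<Longrightarrow> (\<Sum>j\<in>K. A i j * v j) = 0"
  shows "det_on K A = 0"
proof -
  obtain xs where xs: "set xs = K" "distinct xs" using finite_distinct_list[OF fin] by blast
  define n where "n = length xs"
  define M where "M = mat n n (\<lambda>(i,j). A (xs!i) (xs!j))"
  define w where "w = vec n (\<lambda>j. v (xs!j))"
  have MC: "M \<in> carrier_mat n n" unfolding M_def by simp
  have wC: "w \<in> carrier_vec n" unfolding w_def by simp
  obtain idx where idx: "idx < n" "xs ! idx = k" using k xs(1) unfolding n_def by (metis in_set_conv_nth)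
  have wn: "w \<noteq> 0\<^sub>v n"
  proof
    assume "w = 0\<^sub>v n"
    then have "vec_index w idx = 0" using idx by simp
    then show False using idx vk unfolding w_def by simp
  qed
  have bij: "bij_betw (\<lambda>j. xs ! j) {0..<n} K"
    using bij_betw_nth[OF xs(2)] xs(1) unfolding n_def by (simp add: atLeast0LessThan)
  have Mw: "M *\<^sub>v w = 0\<^sub>v n"
  proof (rule eq_vecI)
    fix i assume "i < dim_vec (0\<^sub>v n :: real vec)"
    then have i: "i < n" by simp
    have "vec_index (M *\<^sub>v w) i = (\<Sum>j\<in>{0..<n}. A (xs!i) (xs!j) * v (xs!j))"
      using i unfolding M_def w_def by (simp add: scalar_prod_def Matrix.row_def)
    also have "\<dots> = (\<Sum>l\<in>K. A (xs!i) l * v l)"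
      by (rule sum.reindex_bij_betw[OF bij])
    also have "\<dots> = 0"
    proof -
      have "xs ! i \<in> K" using i xs(1) n_def nth_mem by blast
      then show ?thesis using z by blast
    qed
    finally show "vec_index (M *\<^sub>v w) i = vec_index (0\<^sub>v n) i" using i by simp
  qed (simp add: M_def)
  have "det M = 0" using det_0_iff_vec_prod_zero[OF MC] wC wn Mw by blast
  then show ?thesis using det_on_bridge[OF xs(2), of A] xs(1) unfolding M_def n_def by simp
qed



definition spl :: "species list" where
  "spl = [NE C1, NE C2, NI C1, NI C2, N C1, N C2, Ds C1, Ds C2, D C1, D C2, T C1, T C2, B C1, B C2]"

lemma UNIV_spl: "(UNIV :: species set) = set spl"
  using species_cases unfolding spl_def by auto

lemma distinct_spl: "distinct spl" by (simp add: spl_def)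

lemma sum_sp: "(\<Sum>x\<in>UNIV. f x) = sum_list (map f spl)"
  unfolding UNIV_spl by (rule sum.distinct_set_conv_list[OF distinct_spl])

lemma all_sp: "(\<forall>x::species. P x) \<longleftrightarrow> (\<forall>x\<in>set spl. P x)"
  using UNIV_spl by auto

lemma reaction_cases: "x \<in> {R1 C1, R1 C2, R2 C1, R2 C2, R6 C1, R6 C2, R7 C1, R7 C2, R8 C1, R8 C2, R9 C1, R9 C2}"
proof (cases x)
  case (R1 c) then show ?thesis by (cases c) auto
next
  case (R2 c) then show ?thesis by (cases c) auto
next
  case (R6 c) then show ?thesis by (cases c) auto
next
  case (R7 c) then show ?thesis by (cases c) auto
next
  case (R8 c) then show ?thesis by (cases c) auto
next
  case (R9 c) then show ?thesis by (cases c) auto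
qed

definition rxl :: "reaction list" where
  "rxl = [R1 C1, R1 C2, R2 C1, R2 C2, R6 C1, R6 C2, R7 C1, R7 C2, R8 C1, R8 C2, R9 C1, R9 C2]"

lemma UNIV_rxl: "(UNIV :: reaction set) = set rxl"
  using reaction_cases unfolding rxl_def by auto

lemma sum_rx: "(\<Sum>x\<in>UNIV. f x) = sum_list (map f rxl)"
  unfolding UNIV_rxl by (rule sum.distinct_set_conv_list) (simp add: rxl_def)

lemma all_rx: "(\<forall>x::reaction. P x) \<longleftrightarrow> (\<forall>x\<in>set rxl. P x)"
  using UNIV_rxl by auto

lemma card_species: "CARD(species) = 14"
  unfolding UNIV_spl using distinct_card[OF distinct_spl] by (simp add: spl_def)

definition pv :: "species set" where "pv = {NE C1, NI C1, Ds C1, B C1, B C2}"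

definition wl :: "species \<Rightarrow> (species \<times> real) list" where
 "wl p = (if p = NE C1 then [(NE C1,1),(NE C2,1),(NI C2,-1),(N C1,1),(Ds C2,-1),(D C2,-1),(T C1,1)]
   else if p = NI C1 then [(NI C1,1),(N C1,1),(Ds C2,-1),(D C2,-1),(T C2,-1)]
   else if p = Ds C1 then [(NI C2,-1),(N C2,-1),(Ds C1,1),(D C1,1),(T C1,1)]
   else if p = B C1 then [(NI C2,1),(N C2,1),(B C1,1)]
   else if p = B C2 then [(Ds C2,1),(D C2,1),(T C2,1),(B C2,1)] else [])"

definition wv :: "species \<Rightarrow> species \<Rightarrow> real" where
  "wv p j = (case map_of (wl p) j of Some x \<Rightarrow> x | None \<Rightarrow> 0)"

definition ef :: "species \<Rightarrow> species \<Rightarrow> real" where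
  "ef p j = (if p \<in> pv \<and> j \<notin> pv then wv p j else 0)"

definition pw :: "species \<Rightarrow> species \<Rightarrow> real" where
  "pw p j = (if j = p then 1 else 0) + ef p j"

definition EE :: "real^species^species" where "EE = (\<chi> p j. ef p j)"
definition PP :: "real^species^species" where "PP = Finite_Cartesian_Product.mat 1 + EE"
definition QQ :: "real^species^species" where "QQ = Finite_Cartesian_Product.mat 1 - EE"

definition uf :: "species \<Rightarrow> real" where
  "uf m = (case m of NE c \<Rightarrow> (if c = C1 then -2 else 2) | NI c \<Rightarrow> (if c = C1 then 2 else -2)
     | N c \<Rightarrow> (if c = C1 then -1 else 1) | Ds c \<Rightarrow> 0 | D c \<Rightarrow> (if c = C1 then -1 else 1)
     | T c \<Rightarrow> 0 | B c \<Rightarrow> (if c = C1 then 1 else -1))"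

definition uvec :: "real^species" where "uvec = (\<chi> m. uf m)"
definition v0 :: "real^species" where "v0 = (\<chi> m. if m \<in> pv then 0 else uf m)"

definition Rm :: "real^species^reaction" where "Rm = react_matrix bIII_in (\<lambda>_ _. 1)"
definition GG :: "real^species^species" where "GG = SS ** Rm"
definition HH :: "real^species^species" where "HH = PP ** GG ** QQ"

lemma ef_ef: "ef i k * ef k j = 0"
  unfolding ef_def by auto

lemma PQ: "PP ** QQ = Finite_Cartesian_Product.mat 1"
proof -
  have "\<And>i j. (\<Sum>k\<in>UNIV. ((if i = k then 1 else 0) + ef i k) * ((if k = j then 1 else 0) - ef k j)) =
          (if i = j then 1 else 0)"
  proof -
    fix i j :: species
    have e: "\<And>k. ((if i = k then 1 else 0) + ef i k) * ((if k = j then 1 else 0) - ef k j) =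
       (if i = k then (if k = j then 1 else 0) else 0) - (if i = k then ef k j else 0) + (if k = j then ef i k else 0) - ef i k * ef k j"
      by (simp add: algebra_simps)
    show "(\<Sum>k\<in>UNIV. ((if i = k then 1 else 0) + ef i k) * ((if k = j then 1 else 0) - ef k j)) =
          (if i = j then 1 else 0)"
      unfolding e by (simp add: sum.distrib sum_subtractf ef_ef)
  qed
  then show ?thesis
    unfolding PP_def QQ_def EE_def
    by (simp add: Finite_Cartesian_Product.vec_eq_iff matrix_matrix_mult_def Finite_Cartesian_Product.mat_def)
qed


lemma sum_map_of:
  fixes f :: "'a::finite \<Rightarrow> real"
  shows "distinct (map fst l) \<Longrightarrow> (\<Sum>m\<in>UNIV. (case map_of l m of Some x \<Rightarrow> x | None \<Rightarrow> 0) * f m) = (\<Sum>(j,x)\<leftarrow>l. x * f j)"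
proof (induction l)
  case Nil
  then show ?case by simp
next
  case (Cons a l)
  obtain j x where a: "a = (j, x)" by (cases a)
  have nj: "map_of l j = None" using Cons.prems a by (simp add: map_of_eq_None_iff)
  have "(\<Sum>m\<in>UNIV. (case map_of (a # l) m of Some x \<Rightarrow> x | None \<Rightarrow> 0) * f m) =
        (\<Sum>m\<in>UNIV. (if m = j then x * f j else 0) + (case map_of l m of Some x \<Rightarrow> x | None \<Rightarrow> 0) * f m)"
    by (rule sum.cong) (auto simp: a nj)
  also have "\<dots> = x * f j + (\<Sum>(j,x)\<leftarrow>l. x * f j)"
    using Cons by (simp add: sum.distrib a)
  finally show ?case by (simp add: a)
qed

lemma pw_wv: "p \<in> pv \<Longrightarrow> pw p m = wv p m"
proof -
  assume p: "p \<in> pv"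
  have "\<forall>p\<in>set [NE C1, NI C1, Ds C1, B C1, B C2]. \<forall>m\<in>set [NE C1, NI C1, Ds C1, B C1, B C2]. wv p m = (if m = p then 1 else 0)"
    unfolding Ball_set_list_all list.pred_inject by (simp add: wv_def wl_def)
  then show ?thesis using p unfolding pw_def ef_def pv_def by auto
qed

lemma wl_dist: "distinct (map fst (wl p))" by (simp add: wl_def)

lemma wv_sum: "(\<Sum>m\<in>UNIV. wv p m * f m) = (\<Sum>(j,x)\<leftarrow>wl p. x * f j)"
  unfolding wv_def by (rule sum_map_of[OF wl_dist])

lemma wS_all: "\<forall>p\<in>set [NE C1, NI C1, Ds C1, B C1, B C2]. \<forall>r\<in>set rxl. (\<Sum>m\<in>UNIV. wv p m * sf m r) = 0"
  unfolding Ball_set_list_all rxl_def list.pred_inject wv_sum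
  by (simp add: wl_def)

lemma wS: "p \<in> pv \<Longrightarrow> (\<Sum>m\<in>UNIV. pw p m * sf m r) = 0"
  using wS_all UNIV_rxl pw_wv unfolding pv_def by auto

lemma PP_ent: "PP $ p $ m = pw p m"
  by (simp add: PP_def EE_def Finite_Cartesian_Product.mat_def pw_def eq_commute)

lemma row_zero_mult: "\<forall>r. X $ p $ r = (0::real) \<Longrightarrow> (X ** Y) $ p $ k = 0"
  by (simp add: matrix_matrix_mult_def)

lemma HH_row: "p \<in> pv \<Longrightarrow> HH $ p $ j = 0"
proof -
  assume p: "p \<in> pv"
  have a: "\<forall>r. (PP ** SS) $ p $ r = 0"
    using wS[OF p] by (simp add: matrix_matrix_mult_def PP_ent S_eq)
  have b: "\<forall>k. (PP ** GG) $ p $ k = 0"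
    unfolding GG_def matrix_mul_assoc using row_zero_mult[OF a] by blast
  show ?thesis unfolding HH_def using row_zero_mult[OF b] by blast
qed

lemma Qv0: "QQ *v v0 = uvec"
proof -
  have "\<forall>i\<in>set spl. (\<Sum>j\<in>UNIV. ((if i = j then 1 else 0) - ef i j) * (if j \<in> pv then 0 else uf j)) = uf i"
    unfolding Ball_set_list_all list.pred_inject sum_sp spl_def
    by (simp add: ef_def pv_def wv_def wl_def uf_def)
  then show ?thesis
    unfolding Finite_Cartesian_Product.vec_eq_iff all_sp[symmetric]
    by (simp add: QQ_def EE_def v0_def uvec_def matrix_vector_mult_def Finite_Cartesian_Product.mat_def)
qed

lemma Rm_ent: "Rm $ r $ m = (if bIII_in r m > 0 then 1 else 0)"
  by (simp add: Rm_def react_matrix_def reactant_def)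

definition yf :: "reaction \<Rightarrow> real" where
  "yf r = (case r of R1 c \<Rightarrow> 0 | R2 c \<Rightarrow> 0 | R6 c \<Rightarrow> (if c = C1 then -1 else 1)
     | R7 c \<Rightarrow> (if c = C1 then -1 else 1) | R8 c \<Rightarrow> 0 | R9 c \<Rightarrow> 0)"

lemma GGu: "GG *v uvec = 0"
proof -
  have y: "\<forall>r\<in>set rxl. (\<Sum>m\<in>UNIV. (if bIII_in r m > 0 then 1 else 0) * uf m) = yf r"
    unfolding Ball_set_list_all list.pred_inject sum_sp spl_def rxl_def
    by (simp add: uf_def yf_def)
  then have y': "\<And>r. (\<Sum>m\<in>UNIV. (if bIII_in r m > 0 then 1 else 0) * uf m) = yf r"
    using UNIV_rxl by auto
  have "\<forall>i\<in>set spl. (\<Sum>r\<in>UNIV. sf i r * yf r) = 0"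
    unfolding Ball_set_list_all list.pred_inject sum_rx spl_def rxl_def
    by (simp add: yf_def)
  then have "\<forall>i\<in>set spl. (\<Sum>r\<in>UNIV. sf i r * (\<Sum>m\<in>UNIV. (if bIII_in r m > 0 then 1 else 0) * uf m)) = 0"
    by (simp add: y')
  then show ?thesis
    unfolding GG_def matrix_vector_mul_assoc[symmetric] Finite_Cartesian_Product.vec_eq_iff all_sp[symmetric]
    by (simp add: matrix_vector_mult_def Rm_ent S_eq uvec_def)
qed

lemma HHv0: "HH *v v0 = 0"
  unfolding HH_def matrix_vector_mul_assoc[symmetric] Qv0 GGu by simp


lemma card_pv: "card pv = 5" by (simp add: pv_def)

lemma card_K0: "card (- pv) = 9"
  using card_Compl'[of pv] card_pv card_species by simp

lemma HH_K0: "det_on (- pv) (\<lambda>i j. HH $ i $ j) = 0"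
proof (rule det_on_null[where k = "NE C2" and v = "\<lambda>j. v0 $ j"])
  show "finite (- pv)" by simp
  show "NE C2 \<in> - pv" by (simp add: pv_def)
  show "v0 $ NE C2 \<noteq> 0" by (simp add: v0_def pv_def uf_def)
  fix i assume "i \<in> - pv"
  have "(\<Sum>j\<in>- pv. HH $ i $ j * v0 $ j) = (\<Sum>j\<in>UNIV. HH $ i $ j * v0 $ j)"
    by (rule sum.mono_neutral_left) (auto simp: v0_def)
  also have "\<dots> = (HH *v v0) $ i" by (simp add: matrix_vector_mult_def)
  also have "\<dots> = 0" by (simp add: HHv0)
  finally show "(\<Sum>j\<in>- pv. HH $ i $ j * v0 $ j) = 0" .
qed

lemma pms_HH: "principal_minor_sum 9 HH = 0"
  unfolding principal_minor_sum_def
proof (rule sum.neutral, rule ballI)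
  fix K :: "species set" assume "K \<in> {K. card K = 9}"
  then have cK: "card K = 9" by simp
  show "det_on K (\<lambda>i j. HH $ i $ j) = 0"
  proof (cases "K \<subseteq> - pv")
    case True
    then have "K = - pv" using card_subset_eq[of "- pv" K] card_K0 cK by simp
    then show ?thesis using HH_K0 by simp
  next
    case False
    then obtain p where "p \<in> K" "p \<in> pv" by auto
    then show ?thesis by (intro det_on_zero_row[of K p]) (auto simp: HH_row)
  qed
qed

lemma pms_GG: "principal_minor_sum 9 GG = 0"
  using pms_similar[OF PQ, of 9 GG] pms_HH card_species unfolding HH_def by simp



definition wr :: "species \<Rightarrow> real^species" where "wr p = (\<chi> j. wv p j)"

lemma wv_piv: "p \<in> pv \<Longrightarrow> p0 \<in> pv \<Longrightarrow> wv p p0 = (if p0 = p then 1 else 0)"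
  using pw_wv[of p p0] unfolding pw_def ef_def by simp

lemma wr_in: "p \<in> pv \<Longrightarrow> wr p v* SS = 0"
proof -
  assume p: "p \<in> pv"
  have "\<forall>r. (\<Sum>m\<in>UNIV. wv p m * sf m r) = 0"
    using wS_all UNIV_rxl p unfolding pv_def by auto
  then show ?thesis
    by (simp add: Finite_Cartesian_Product.vec_eq_iff vector_matrix_mult_def wr_def S_eq mult.commute)
qed

lemma scale_vm: "(c *\<^sub>R x) v* (A::real^'m^'n) = c *\<^sub>R (x v* A)"
  by (simp add: Finite_Cartesian_Product.vec_eq_iff vector_matrix_mult_def sum_distrib_left mult_ac)

lemma subspace_V: "subspace {w :: real^species. w v* SS = 0}"
  unfolding subspace_def
  by (auto simp: vector_matrix_left_distrib scale_vm)

lemma V_span: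
  assumes w: "w v* SS = 0"
  shows "w \<in> span (wr ` pv)"
proof -
  have eq: "\<forall>r. (\<Sum>m\<in>UNIV. sf m r * w $ m) = 0"
    using w by (simp add: Finite_Cartesian_Product.vec_eq_iff vector_matrix_mult_def S_eq mult.commute)
  then have eqs: "\<forall>r\<in>set rxl. (\<Sum>m\<in>UNIV. sf m r * w $ m) = 0" by simp
  have comp: "\<forall>j\<in>set spl. w $ j = (\<Sum>p\<in>pv. w $ p * wv p j)"
    using eqs
    unfolding Ball_set_list_all list.pred_inject rxl_def spl_def sum_sp
    by (simp add: pv_def wv_def wl_def)
  have all: "w $ j = (\<Sum>p\<in>pv. w $ p * wv p j)" for j
  proof -
    have "j \<in> set spl" using UNIV_spl by blast
    then show ?thesis using comp by blast
  qed
  have "(\<Sum>p\<in>pv. (w $ p) *\<^sub>R wr p) = w"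
    unfolding Finite_Cartesian_Product.vec_eq_iff
  proof
    fix j
    have "(\<Sum>p\<in>pv. (w $ p) *\<^sub>R wr p) $ j = (\<Sum>p\<in>pv. w $ p * wv p j)"
      by (simp add: sum_component wr_def)
    also have "\<dots> = w $ j" using all[of j] by simp
    finally show "(\<Sum>p\<in>pv. (w $ p) *\<^sub>R wr p) $ j = w $ j" .
  qed
  then have "w = (\<Sum>p\<in>pv. (w $ p) *\<^sub>R wr p)" by simp
  also have "\<dots> \<in> span (wr ` pv)"
    by (intro span_sum span_scale span_base) auto
  finally show ?thesis .
qed

lemma inj_wr: "inj_on wr pv"
proof (rule inj_onI)
  fix p q assume pq: "p \<in> pv" "q \<in> pv" "wr p = wr q"
  then have "wv p p = wv q p" unfolding wr_def by (metis vec_lambda_beta)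
  then show "p = q" using wv_piv pq by (auto split: if_splits)
qed

lemma indep_wr: "independent (wr ` pv)"
  unfolding independent_explicit
proof (intro conjI allI impI ballI)
  show "finite (wr ` pv)" by simp
  fix c v assume c: "(\<Sum>v\<in>wr ` pv. c v *\<^sub>R v) = 0" and v: "v \<in> wr ` pv"
  then obtain p0 where p0: "p0 \<in> pv" "v = wr p0" by auto
  have "(\<Sum>p\<in>pv. c (wr p) *\<^sub>R wr p) = 0" using c sum.reindex[OF inj_wr, of "\<lambda>v. c v *\<^sub>R v"] by simp
  then have "(\<Sum>p\<in>pv. c (wr p) *\<^sub>R wr p) $ p0 = 0" by simp
  then have "(\<Sum>p\<in>pv. c (wr p) * wv p p0) = 0" by (simp add: sum_component wr_def)
  moreover have "(\<Sum>p\<in>pv. c (wr p) * wv p p0) = c (wr p0)"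
    using p0(1) by (simp add: wv_piv if_distrib[of "\<lambda>x. c _ * x"] cong: if_cong)
  ultimately show "c v = 0" using p0 by simp
qed

lemma n_cons_SS: "n_cons SS = 5"
proof -
  have "span (wr ` pv) = {w :: real^species. w v* SS = 0}"
    by (rule span_subspace) (use wr_in V_span subspace_V in auto)
  then have "n_cons SS = dim (span (wr ` pv))" unfolding n_cons_def by simp
  also have "\<dots> = card (wr ` pv)" using dim_eq_card_independent[OF indep_wr] by simp
  also have "\<dots> = 5" using card_image[OF inj_wr] card_pv by simp
  finally show ?thesis .
qed



lemma zero_eig: "zero_eig_capacity bIII_in bIII_out swap_reaction swap_species"
  unfolding zero_eig_capacity_def
proof (intro exI[of _ "\<lambda>_ _. 1"] conjI allI impI)
  show "a_top SS (SS ** react_matrix bIII_in (\<lambda>_ _. 1)) = 0"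
    unfolding a_top_def n_cons_SS card_species using pms_GG unfolding GG_def Rm_def by simp
qed simp_all

definition mK :: "cell \<Rightarrow> species list" where
  "mK c = [N c, Ds (other c), D (other c), T (other c)]"

lemma motif_subs:
  "\<forall>xs\<in>set (subseqs (mK c)). xs \<noteq> [] \<longrightarrow> length xs < 4 \<longrightarrow>
     sgn (gdet xs xs (\<lambda>m l. sf m (mJ c l))) \<noteq> (-1) ^ (length xs - 1)"
  by (cases c) (simp_all add: mK_def mJ_def)

lemma motif_upf:
  "cs_triple bIII_in (set (mK c)) (mJ c) \<and> unstable_pos_fb SS (set (mK c)) (mJ c)"
proof
  show "cs_triple bIII_in (set (mK c)) (mJ c)"
    unfolding cs_triple_def reactant_iff
    by (cases c) (auto simp: mK_def mJ_def inj_on_def opts_def)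
  have dK: "distinct (mK c)" by (cases c) (simp_all add: mK_def)
  have cK: "card (set (mK c)) = 4" using distinct_card[OF dK] by (simp add: mK_def)
  have d: "cs_det SS (mJ c) (set (mK c)) = -1"
    unfolding cs_det_sf using motif_det[of c] by (simp add: mK_def)
  show "unstable_pos_fb SS (set (mK c)) (mJ c)"
    unfolding unstable_pos_fb_def
  proof (intro conjI allI impI)
    show "sgn (cs_det SS (mJ c) (set (mK c))) = (-1) ^ (card (set (mK c)) - 1)" using d cK by simp
    fix K assume K: "K \<subset> set (mK c) \<and> K \<noteq> {}"
    then have "K \<in> Pow (set (mK c))" by auto
    then obtain xs where xs: "xs \<in> set (subseqs (mK c))" "set xs = K"
      unfolding subseqs_powset[symmetric] by auto
    have dx: "distinct xs" using subseqs_distinctD[OF xs(1) dK] .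
    have cx: "card K = length xs" using distinct_card[OF dx] xs(2) by simp
    have "card K < 4" using psubset_card_mono[of "set (mK c)" K] K cK by simp
    then have l: "xs \<noteq> []" "length xs < 4" using K xs(2) cx by auto
    have "cs_det SS (mJ c) K = gdet xs xs (\<lambda>m l. sf m (mJ c l))"
      unfolding cs_det_sf xs(2)[symmetric] by (rule det_on_gdet[OF dx])
    then show "sgn (cs_det SS (mJ c) K) \<noteq> (-1) ^ (card K - 1)"
      using motif_subs[of c] xs(1) l cx by auto
  qed
qed

lemma motif_image: "(set (mK c), mJ c ` set (mK c)) = bIII_motif c"
  by (cases c) (auto simp: mK_def mJ_def bIII_motif_def)

lemma motifs_eq: "instability_motifs bIII_in bIII_out = {bIII_motif C1, bIII_motif C2}"
proof
  show "instability_motifs bIII_in bIII_out \<subseteq> {bIII_motif C1, bIII_motif C2}"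
    unfolding instability_motifs_def using classify by blast
  show "{bIII_motif C1, bIII_motif C2} \<subseteq> instability_motifs bIII_in bIII_out"
  proof -
    have "bIII_motif c \<in> instability_motifs bIII_in bIII_out" for c
      unfolding instability_motifs_def
    proof (rule CollectI, intro exI conjI)
      show "bIII_motif c = (set (mK c), mJ c ` set (mK c))" using motif_image[of c] by simp
    qed (use motif_upf[of c] in auto)
    then show ?thesis by auto
  qed
qed

lemma no_metzler:
  assumes ct: "cs_triple bIII_in \<kappa> J" and upf: "unstable_pos_fb SS \<kappa> J"
  shows "\<not> cs_metzler SS \<kappa> J"
proof
  assume mz: "cs_metzler SS \<kappa> J"
  obtain c where c: "(\<kappa>, J ` \<kappa>) = bIII_motif c" using classify[OF ct upf] by blast
  then have k: "\<kappa> = {N c, Ds (other c), D (other c), T (other c)}" unfolding bIII_motif_def by simp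
  have "reactant bIII_in (J (D (other c))) (D (other c))" using ct k unfolding cs_triple_def by auto
  then have "J (D (other c)) = R2 c" unfolding reactant_iff opts_def by simp
  then have "SS $ N c $ J (D (other c)) = -1" by (cases c) (simp_all add: S_eq)
  moreover have "0 \<le> SS $ N c $ J (D (other c))" using mz k unfolding cs_metzler_def by auto
  ultimately show False by simp
qed

theorem theorem3p3:
  shows "zero_eig_capacity bIII_in bIII_out swap_reaction swap_species
       \<and> instability_motifs bIII_in bIII_out = {bIII_motif C1, bIII_motif C2}
       \<and> (\<forall>\<kappa> J. cs_triple bIII_in \<kappa> J
                \<and> unstable_pos_fb (stoich_matrix bIII_in bIII_out) \<kappa> J
                \<longrightarrow> \<not> cs_metzler (stoich_matrix bIII_in bIII_out) \<kappa> J)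
       \<and> non_autocatalytic bIII_in bIII_out"
  using zero_eig motifs_eq no_metzler unfolding non_autocatalytic_def by blast


end
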